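(* Let $\mathbb{F}$ be a field and let $H\le\mathrm{GL}(n,\mathbb{F})$ be unipotent-by-abelian. Then $gh-hg\in\mathrm{Rad}\langle H\rangle_{\mathbb{F}}$ for all $g,h\in H$.
   Context: A group $H\le\mathrm{GL}(n,\mathbb{F})$ is unipotent-by-abelian if it has a unipotent normal subgroup with abelian quotient. $\langle H\rangle_{\mathbb{F}}$ denotes the $\mathbb{F}$-enveloping algebra of $H$ (the $\mathbb{F}$-subalgebra of $\mathrm{Mat}(n,\mathbb{F})$ generated by $H$), and $\mathrm{Rad}$ denotes its Jacobson radical. *)

theory Defs
  imports "Jordan_Normal_Form.Matrix"
begin

definition GL_subgroup :: "nat \<Rightarrow> 'a::field mat set \<Rightarrow> bool" where
  "GL_subgroup n H \<longleftrightarrow> H \<subseteq> carrier_mat n n \<and> (\<forall>h\<in>H. invertible_mat h)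
     \<and> 1\<^sub>m n \<in> H \<and> (\<forall>g\<in>H. \<forall>h\<in>H. g * h \<in> H)
     \<and> (\<forall>g\<in>H. \<exists>g'\<in>H. g * g' = 1\<^sub>m n \<and> g' * g = 1\<^sub>m n)"

definition subgroup_of :: "nat \<Rightarrow> 'a::field mat set \<Rightarrow> 'a mat set \<Rightarrow> bool" where
  "subgroup_of n U H \<longleftrightarrow> U \<subseteq> H \<and> GL_subgroup n U"

definition normal_subgroup_of :: "nat \<Rightarrow> 'a::field mat set \<Rightarrow> 'a mat set \<Rightarrow> bool" where
  "normal_subgroup_of n U H \<longleftrightarrow> subgroup_of n U H \<and>
     (\<forall>g\<in>H. (\<lambda>u. g * u) ` U = (\<lambda>u. u * g) ` U)"

definition unipotent_mat :: "nat \<Rightarrow> 'a::field mat \<Rightarrow> bool" where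
  "unipotent_mat n u \<longleftrightarrow> (\<exists>k. (u - 1\<^sub>m n) ^\<^sub>m k = 0\<^sub>m n n)"

text \<open>H is unipotent-by-abelian: it has a unipotent normal subgroup U with H/U abelian,
  i.e. the cosets gU and hU commute: (gh)U = (hg)U for all g, h in H.\<close>
definition unipotent_by_abelian :: "nat \<Rightarrow> 'a::field mat set \<Rightarrow> bool" where
  "unipotent_by_abelian n H \<longleftrightarrow> (\<exists>U. normal_subgroup_of n U H \<and> (\<forall>u\<in>U. unipotent_mat n u)
     \<and> (\<forall>g\<in>H. \<forall>h\<in>H. (\<lambda>u. g * h * u) ` U = (\<lambda>u. h * g * u) ` U))"

inductive_set env_alg :: "nat \<Rightarrow> 'a::field mat set \<Rightarrow> 'a mat set" for n H where
  gen: "h \<in> H \<Longrightarrow> h \<in> env_alg n H"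
| zero: "0\<^sub>m n n \<in> env_alg n H"
| one: "1\<^sub>m n \<in> env_alg n H"
| add: "a \<in> env_alg n H \<Longrightarrow> b \<in> env_alg n H \<Longrightarrow> a + b \<in> env_alg n H"
| smult: "a \<in> env_alg n H \<Longrightarrow> c \<cdot>\<^sub>m a \<in> env_alg n H"
| mult: "a \<in> env_alg n H \<Longrightarrow> b \<in> env_alg n H \<Longrightarrow> a * b \<in> env_alg n H"

definition left_ideal :: "nat \<Rightarrow> 'a::field mat set \<Rightarrow> 'a mat set \<Rightarrow> bool" where
  "left_ideal n A L \<longleftrightarrow> L \<subseteq> A \<and> 0\<^sub>m n n \<in> L \<and> (\<forall>x\<in>L. \<forall>y\<in>L. x + y \<in> L)
     \<and> (\<forall>x\<in>L. - x \<in> L) \<and> (\<forall>a\<in>A. \<forall>x\<in>L. a * x \<in> L)"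

definition maximal_left_ideal :: "nat \<Rightarrow> 'a::field mat set \<Rightarrow> 'a mat set \<Rightarrow> bool" where
  "maximal_left_ideal n A L \<longleftrightarrow> left_ideal n A L \<and> L \<noteq> A \<and>
     (\<forall>L'. left_ideal n A L' \<and> L \<subseteq> L' \<longrightarrow> L' = L \<or> L' = A)"

definition jacobson_rad :: "nat \<Rightarrow> 'a::field mat set \<Rightarrow> 'a mat set" where
  "jacobson_rad n A = {x \<in> A. \<forall>L. maximal_left_ideal n A L \<longrightarrow> x \<in> L}"

end

theory Submission
  imports Defs "Jordan_Normal_Form.Determinant" "Jordan_Normal_Form.Char_Poly" "HOL-Algebra.Algebraic_Closure_Type"
begin

no_notation fps_nth (infixl \<open>$\<close> 75)

definition mtr :: "'a::comm_ring_1 mat \<Rightarrow> 'a" where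
  "mtr A = (\<Sum>i<dim_row A. A $$ (i,i))"

definition inj_mat :: "'a::field mat \<Rightarrow> bool" where
  "inj_mat Xm \<longleftrightarrow> (\<forall>z \<in> carrier_vec (dim_col Xm). Xm *\<^sub>v z = 0\<^sub>v (dim_row Xm) \<longrightarrow> z = 0\<^sub>v (dim_col Xm))"

definition subsp :: "nat \<Rightarrow> 'a::field vec set \<Rightarrow> bool" where
  "subsp n W \<longleftrightarrow> W \<subseteq> carrier_vec n \<and> 0\<^sub>v n \<in> W \<and> (\<forall>x\<in>W. \<forall>y\<in>W. x + y \<in> W)
     \<and> (\<forall>c. \<forall>x\<in>W. c \<cdot>\<^sub>v x \<in> W)"

lemma mtr_mult_comm:
  fixes Xm :: "'a::comm_ring_1 mat"
  assumes "Xm \<in> carrier_mat n k" "Y \<in> carrier_mat k n"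
  shows "mtr (Xm * Y) = mtr (Y * Xm)"
proof -
  have "mtr (Xm * Y) = (\<Sum>i<n. \<Sum>j<k. Xm $$ (i,j) * Y $$ (j,i))"
    using assms by (simp add: mtr_def scalar_prod_def atLeast0LessThan)
  also have "\<dots> = (\<Sum>j<k. \<Sum>i<n. Y $$ (j,i) * Xm $$ (i,j))"
    by (subst sum.swap) (simp add: mult.commute)
  also have "\<dots> = mtr (Y * Xm)"
    using assms by (simp add: mtr_def scalar_prod_def atLeast0LessThan)
  finally show ?thesis .
qed

lemma mtr_add: "A \<in> carrier_mat n n \<Longrightarrow> B \<in> carrier_mat n n \<Longrightarrow> mtr (A + B) = mtr A + mtr B"
  by (simp add: mtr_def sum.distrib)

lemma mtr_minus: "A \<in> carrier_mat n n \<Longrightarrow> B \<in> carrier_mat n n \<Longrightarrow> mtr (A - B) = mtr A - mtr B"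
  by (simp add: mtr_def sum_subtractf)

lemma mtr_smult: "A \<in> carrier_mat n n \<Longrightarrow> mtr (c \<cdot>\<^sub>m A) = c * mtr A"
  by (simp add: mtr_def sum_distrib_left)

lemma mtr_one: "mtr (1\<^sub>m n :: 'a::comm_ring_1 mat) = of_nat n"
  by (simp add: mtr_def)

lemma mtr_zero: "mtr (0\<^sub>m n n :: 'a::comm_ring_1 mat) = 0"
  by (simp add: mtr_def)

lemma mat_vec_zero_right[simp]:
  fixes B :: "'a::comm_ring_1 mat"
  shows "B \<in> carrier_mat nr n \<Longrightarrow> B *\<^sub>v 0\<^sub>v n = 0\<^sub>v nr"
  by (intro eq_vecI) (auto simp: scalar_prod_def)

lemma inj_matD:
  assumes "inj_mat Xm" "Xm \<in> carrier_mat n k" "z \<in> carrier_vec k" "Xm *\<^sub>v z = 0\<^sub>v n"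
  shows "z = 0\<^sub>v k"
  using assms unfolding inj_mat_def by auto

lemma inj_mat_mult_zero:
  assumes "inj_mat Xm" "Xm \<in> carrier_mat n k" "Z \<in> carrier_mat k m" "Xm * Z = 0\<^sub>m n m"
  shows "Z = 0\<^sub>m k m"
proof (rule eq_matI)
  fix i j assume ij: "i < dim_row (0\<^sub>m k m :: 'a mat)" "j < dim_col (0\<^sub>m k m :: 'a mat)"
  have "Xm *\<^sub>v col Z j = col (Xm * Z) j" using col_mult2[OF assms(2,3)] ij by simp
  also have "\<dots> = 0\<^sub>v n" using assms(4) ij unfolding col_def by (intro eq_vecI) auto
  finally have "col Z j = 0\<^sub>v k" using inj_matD[OF assms(1,2)] assms ij by simp
  then have "col Z j $ i = 0" using ij by simp
  then show "Z $$ (i,j) = 0\<^sub>m k m $$ (i,j)" using assms ij by simp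
qed (use assms in auto)

lemma inj_mat_cancel:
  fixes Xm :: "'a::field mat"
  assumes "inj_mat Xm" "Xm \<in> carrier_mat n k" "Z \<in> carrier_mat k m" "Z' \<in> carrier_mat k m" "Xm * Z = Xm * Z'"
  shows "Z = Z'"
proof -
  have "Xm * (Z - Z') = Xm * Z - Xm * Z'" using assms by (simp add: mult_minus_distrib_mat)
  also have "\<dots> = 0\<^sub>m n m" using assms by (metis minus_r_inv_mat mult_carrier_mat)
  finally have "Z - Z' = 0\<^sub>m k m" using inj_mat_mult_zero[OF assms(1,2), of "Z - Z'" m] minus_carrier_mat[OF assms(4), of Z] by fast
  note zz = this
  show ?thesis
  proof (rule eq_matI)
    fix i j assume ij: "i < dim_row Z'" "j < dim_col Z'"
    then have "(Z - Z') $$ (i,j) = 0" using zz assms by simp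
    then show "Z $$ (i,j) = Z' $$ (i,j)" using assms ij by simp
  qed (use assms in auto)
qed

lemma inj_mat_le:
  fixes Xm :: "'a::field mat"
  assumes Xm: "Xm \<in> carrier_mat n k" and inj: "inj_mat Xm"
  shows "k \<le> n"
proof (rule ccontr)
  assume "\<not> k \<le> n"
  then have kn: "n < k" by simp
  define c where "c = (\<lambda>i. if i < n then row Xm i else 0\<^sub>v k)"
  define Xm' where "Xm' = mat\<^sub>r k k (\<lambda>i. if i = k - 1 then 0\<^sub>v k else c i)"
  have c: "c \<in> {0..<k} \<rightarrow> carrier_vec k" using Xm unfolding c_def by auto
  have "det Xm' = 0" unfolding Xm'_def by (rule det_row_0) (use kn c in auto)
  moreover have Xm'c: "Xm' \<in> carrier_mat k k" unfolding Xm'_def by auto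
  ultimately obtain v where v: "v \<in> carrier_vec k" "v \<noteq> 0\<^sub>v k" "Xm' *\<^sub>v v = 0\<^sub>v k"
    using det_0_iff_vec_prod_zero_field by blast
  have "Xm *\<^sub>v v = 0\<^sub>v n"
  proof (rule eq_vecI)
    fix i assume i: "i < dim_vec (0\<^sub>v n :: 'a vec)"
    then have i': "i < n" by simp
    have "(Xm' *\<^sub>v v) $ i = 0" using v i' kn by simp
    moreover have "(Xm' *\<^sub>v v) $ i = row Xm' i \<bullet> v" using i' kn Xm'c by simp
    moreover have "row Xm' i = row Xm i"
      unfolding Xm'_def c_def using Xm i' kn by (subst row_mat_of_row_fun) auto
    ultimately show "(Xm *\<^sub>v v) $ i = 0\<^sub>v n $ i" using i' Xm by simp
  qed (use Xm in simp)
  then have "v = 0\<^sub>v k" using inj_matD[OF inj Xm v(1)] by simp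
  then show False using v by simp
qed

lemma append_col_mult:
  fixes Xm :: "'a::field mat"
  assumes Xm: "Xm \<in> carrier_mat n k" and w: "w \<in> carrier_vec n" and z: "z \<in> carrier_vec (Suc k)"
  shows "mat n (Suc k) (\<lambda>(i,j). if j < k then Xm $$ (i,j) else w $ i) *\<^sub>v z
     = Xm *\<^sub>v vec k (\<lambda>i. z $ i) + z $ k \<cdot>\<^sub>v w"
proof (rule eq_vecI)
  fix i assume "i < dim_vec (Xm *\<^sub>v vec k (\<lambda>i. z $ i) + z $ k \<cdot>\<^sub>v w)"
  then have i: "i < n" using Xm w by simp
  have "(mat n (Suc k) (\<lambda>(i,j). if j < k then Xm $$ (i,j) else w $ i) *\<^sub>v z) $ i
      = (\<Sum>j<Suc k. (if j < k then Xm $$ (i,j) else w $ i) * z $ j)"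
    using i z by (simp add: scalar_prod_def atLeast0LessThan)
  also have "\<dots> = (\<Sum>j<k. Xm $$ (i,j) * z $ j) + w $ i * z $ k"
    by (simp add: lessThan_Suc)
  also have "\<dots> = (Xm *\<^sub>v vec k (\<lambda>i. z $ i) + z $ k \<cdot>\<^sub>v w) $ i"
    using i Xm w by (simp add: scalar_prod_def atLeast0LessThan mult.commute)
  finally show "(mat n (Suc k) (\<lambda>(i,j). if j < k then Xm $$ (i,j) else w $ i) *\<^sub>v z) $ i
      = (Xm *\<^sub>v vec k (\<lambda>i. z $ i) + z $ k \<cdot>\<^sub>v w) $ i" .
qed (use Xm w in simp)

lemma basis_exists:
  fixes W :: "'a::field vec set"
  assumes W: "subsp n W"
  shows "\<exists>k Xm. Xm \<in> carrier_mat n k \<and> inj_mat Xm \<and> (\<forall>z\<in>carrier_vec k. Xm *\<^sub>v z \<in> W)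
     \<and> (\<forall>w\<in>W. \<exists>z\<in>carrier_vec k. w = Xm *\<^sub>v z)"
proof -
  define S where "S = {k. \<exists>Xm\<in>carrier_mat n k. inj_mat Xm \<and> (\<forall>z\<in>carrier_vec k. Xm *\<^sub>v z \<in> W)}"
  have "0 \<in> S"
  proof -
    have "inj_mat (0\<^sub>m n 0 :: 'a mat)" unfolding inj_mat_def by (auto intro!: eq_vecI)
    moreover have "\<forall>z\<in>carrier_vec 0. (0\<^sub>m n 0 :: 'a mat) *\<^sub>v z \<in> W"
    proof
      fix z :: "'a vec" assume z0: "z \<in> carrier_vec 0"
      have "(0\<^sub>m n 0 :: 'a mat) *\<^sub>v z = 0\<^sub>v n" using z0 by (intro eq_vecI) (auto simp: scalar_prod_def)
      then show "(0\<^sub>m n 0 :: 'a mat) *\<^sub>v z \<in> W" using W unfolding subsp_def by simp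
    qed
    ultimately show ?thesis unfolding S_def using zero_carrier_mat[of n 0] by blast
  qed
  have Sb: "S \<subseteq> {..n}" unfolding S_def using inj_mat_le by auto
  then have fS: "finite S" using finite_subset by blast
  define k where "k = Max S"
  have kS: "k \<in> S" unfolding k_def using fS \<open>0 \<in> S\<close> by (intro Max_in) auto
  have kmax: "\<And>k'. k' \<in> S \<Longrightarrow> k' \<le> k" unfolding k_def using fS by simp
  from kS obtain Xm where Xm: "Xm \<in> carrier_mat n k" "inj_mat Xm" "\<forall>z\<in>carrier_vec k. Xm *\<^sub>v z \<in> W"
    unfolding S_def by blast
  have span: "\<forall>w\<in>W. \<exists>z\<in>carrier_vec k. w = Xm *\<^sub>v z"
  proof (rule ccontr)
    assume "\<not> ?thesis"
    then obtain w where w: "w \<in> W" "\<forall>z\<in>carrier_vec k. w \<noteq> Xm *\<^sub>v z" by blast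
    have wc: "w \<in> carrier_vec n" using w W unfolding subsp_def by auto
    define Xm' where "Xm' = mat n (Suc k) (\<lambda>(i,j). if j < k then Xm $$ (i,j) else w $ i)"
    have Xm'c: "Xm' \<in> carrier_mat n (Suc k)" unfolding Xm'_def by simp
    have Xm'm: "Xm' *\<^sub>v z = Xm *\<^sub>v vec k (\<lambda>i. z $ i) + z $ k \<cdot>\<^sub>v w" if "z \<in> carrier_vec (Suc k)" for z
      unfolding Xm'_def using append_col_mult[OF Xm(1) wc that] .
    have "Suc k \<in> S"
    proof -
      have "Xm' *\<^sub>v z \<in> W" if z: "z \<in> carrier_vec (Suc k)" for z
      proof -
        have "Xm *\<^sub>v vec k (\<lambda>i. z $ i) \<in> W" using Xm(3) by simp
        moreover have "z $ k \<cdot>\<^sub>v w \<in> W" using W w unfolding subsp_def by simp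
        ultimately show ?thesis using W Xm'm[OF z] unfolding subsp_def by simp
      qed
      moreover have "inj_mat Xm'"
        unfolding inj_mat_def
      proof (intro ballI impI)
        fix z assume z: "z \<in> carrier_vec (dim_col Xm')" and z0: "Xm' *\<^sub>v z = 0\<^sub>v (dim_row Xm')"
        then have z': "z \<in> carrier_vec (Suc k)" using Xm'c by simp
        have eq: "Xm *\<^sub>v vec k (\<lambda>i. z $ i) + z $ k \<cdot>\<^sub>v w = 0\<^sub>v n"
          using z0 Xm'm[OF z'] Xm'c by simp
        have zk: "z $ k = 0"
        proof (rule ccontr)
          assume nz: "z $ k \<noteq> 0"
          define y where "y = (- 1 / z $ k) \<cdot>\<^sub>v vec k (\<lambda>i. z $ i)"
          have "w = Xm *\<^sub>v y"
          proof (rule eq_vecI)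
            fix i assume "i < dim_vec (Xm *\<^sub>v y)"
            then have i: "i < n" using Xm by simp
            have "(Xm *\<^sub>v vec k (\<lambda>i. z $ i)) $ i + z $ k * w $ i = 0"
              using arg_cong[OF eq, of "\<lambda>v. v $ i"] i Xm wc by simp
            then have a: "z $ k * w $ i = - (Xm *\<^sub>v vec k (\<lambda>i. z $ i)) $ i"
              by (simp add: eq_neg_iff_add_eq_0 add.commute)
            have "(Xm *\<^sub>v y) $ i = (- 1 / z $ k) * (Xm *\<^sub>v vec k (\<lambda>i. z $ i)) $ i"
              unfolding y_def using Xm i by (simp add: mult_mat_vec)
            then have b: "z $ k * (Xm *\<^sub>v y) $ i = - (Xm *\<^sub>v vec k (\<lambda>i. z $ i)) $ i"
              using nz by simp
            show "w $ i = (Xm *\<^sub>v y) $ i" using a b nz by (metis mult_left_cancel)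
          qed (use Xm wc in simp)
          then show False using w(2) unfolding y_def by simp
        qed
        then have "z $ k \<cdot>\<^sub>v w = 0\<^sub>v n" using wc by (intro eq_vecI) auto
        then have "Xm *\<^sub>v vec k (\<lambda>i. z $ i) = 0\<^sub>v n" using eq wc Xm
          by (metis carrier_vecI dim_vec mult_mat_vec_carrier right_zero_vec)
        then have "vec k (\<lambda>i. z $ i) = 0\<^sub>v k" using inj_matD[OF Xm(2,1)] by simp
        then show "z = 0\<^sub>v (dim_col Xm')"
        proof -
          assume h: "vec k (\<lambda>i. z $ i) = 0\<^sub>v k"
          show ?thesis
          proof (rule eq_vecI)
            fix i assume "i < dim_vec (0\<^sub>v (dim_col Xm') :: 'a vec)"
            then have i: "i < Suc k" using Xm'c by simp
            show "z $ i = 0\<^sub>v (dim_col Xm') $ i"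
            proof (cases "i < k")
              case True
              then show ?thesis using arg_cong[OF h, of "\<lambda>v. v $ i"] i Xm'c by simp
            next
              case False
              then have "i = k" using i by simp
              then show ?thesis using zk Xm'c by simp
            qed
          qed (use z' Xm'c in simp)
        qed
      qed
      ultimately show ?thesis unfolding S_def using Xm'c by blast
    qed
    then show False using kmax by fastforce
  qed
  show ?thesis using Xm span by blast
qed

lemma factor_through:
  fixes X1 :: "'a::field mat"
  assumes X1: "X1 \<in> carrier_mat r k" and S: "S \<in> carrier_mat r m"
    and cols: "\<forall>j<m. \<exists>z\<in>carrier_vec k. col S j = X1 *\<^sub>v z"
  shows "\<exists>Y\<in>carrier_mat k m. S = X1 * Y"
proof -
  define f where "f = (\<lambda>j. SOME z. z \<in> carrier_vec k \<and> col S j = X1 *\<^sub>v z)"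
  have f: "f j \<in> carrier_vec k \<and> col S j = X1 *\<^sub>v f j" if "j < m" for j
    unfolding f_def using someI_ex[OF cols[rule_format, OF that, unfolded Bex_def]] .
  define Y where "Y = mat k m (\<lambda>(i,j). f j $ i)"
  have Yc: "Y \<in> carrier_mat k m" unfolding Y_def by simp
  have colY: "col Y j = f j" if "j < m" for j
    using f[OF that] that unfolding Y_def by (intro eq_vecI) auto
  have "S = X1 * Y"
  proof (rule eq_matI)
    fix i j assume ij: "i < dim_row (X1 * Y)" "j < dim_col (X1 * Y)"
    then have i: "i < r" and j: "j < m" using X1 Yc by auto
    have "(X1 * Y) $$ (i,j) = row X1 i \<bullet> col Y j" using X1 Yc i j by simp
    also have "\<dots> = (X1 *\<^sub>v f j) $ i" using colY[OF j] X1 i by simp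
    also have "\<dots> = col S j $ i" using f[OF j] by simp
    also have "\<dots> = S $$ (i,j)" using S i j by simp
    finally show "S $$ (i,j) = (X1 * Y) $$ (i,j)" by simp
  qed (use X1 S Yc in auto)
  then show ?thesis using Yc by blast
qed

lemma sq_surj_right_inverse:
  fixes A :: "'a::field mat"
  assumes A: "A \<in> carrier_mat n n" and surj: "\<forall>w\<in>carrier_vec n. \<exists>v\<in>carrier_vec n. A *\<^sub>v v = w"
  shows "\<exists>B\<in>carrier_mat n n. A * B = 1\<^sub>m n \<and> B * A = 1\<^sub>m n"
proof -
  have "\<exists>Y\<in>carrier_mat n n. 1\<^sub>m n = A * Y"
  proof (rule factor_through[OF A one_carrier_mat], intro allI impI)
    fix j assume "j < n"
    then have "col (1\<^sub>m n) j \<in> carrier_vec n" by simp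
    then obtain v where "v \<in> carrier_vec n" "A *\<^sub>v v = col (1\<^sub>m n) j" using surj by blast
    then show "\<exists>z\<in>carrier_vec n. col (1\<^sub>m n) j = A *\<^sub>v z" by metis
  qed
  then obtain B where B: "B \<in> carrier_mat n n" "A * B = 1\<^sub>m n" by metis
  then have "B * A = 1\<^sub>m n" using mat_mult_left_right_inverse[OF A B(1)] by simp
  then show ?thesis using B by blast
qed

lemma sq_surj_inj:
  fixes A :: "'a::field mat"
  assumes A: "A \<in> carrier_mat n n" and surj: "\<forall>w\<in>carrier_vec n. \<exists>v\<in>carrier_vec n. A *\<^sub>v v = w"
  shows "inj_mat A"
proof -
  obtain B where B: "B \<in> carrier_mat n n" "B * A = 1\<^sub>m n" using sq_surj_right_inverse[OF A surj] by blast
  show ?thesis unfolding inj_mat_def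
  proof (intro ballI impI)
    fix z assume z: "z \<in> carrier_vec (dim_col A)" and "A *\<^sub>v z = 0\<^sub>v (dim_row A)"
    then have z': "z \<in> carrier_vec n" and Az: "A *\<^sub>v z = 0\<^sub>v n" using A by auto
    have "z = (B * A) *\<^sub>v z" by (subst B(2)) (use z' in simp)
    also have "\<dots> = B *\<^sub>v (A *\<^sub>v z)" using A B(1) z' by simp
    also have "\<dots> = 0\<^sub>v n" using Az B by simp
    finally show "z = 0\<^sub>v (dim_col A)" using A by simp
  qed
qed

lemma sq_inj_surj:
  fixes A :: "'a::field mat"
  assumes A: "A \<in> carrier_mat n n" and inj: "inj_mat A"
  shows "\<forall>w\<in>carrier_vec n. \<exists>v\<in>carrier_vec n. A *\<^sub>v v = w"
proof -
  have "det A \<noteq> 0"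
  proof
    assume "det A = 0"
    then obtain v where "v \<in> carrier_vec n" "v \<noteq> 0\<^sub>v n" "A *\<^sub>v v = 0\<^sub>v n"
      using det_0_iff_vec_prod_zero_field[OF A] by blast
    then show False using inj_matD[OF inj A] by blast
  qed
  from det_non_zero_imp_unit[OF A this, of "()"]
  obtain B where B: "B \<in> carrier_mat n n" "A * B = 1\<^sub>m n"
    unfolding Units_def ring_mat_def by auto
  show ?thesis
  proof
    fix w :: "'a vec" assume w: "w \<in> carrier_vec n"
    have "A *\<^sub>v (B *\<^sub>v w) = (A * B) *\<^sub>v w" using A B(1) w by simp
    also have "\<dots> = w" by (subst B(2)) (use w in simp)
    finally show "\<exists>v\<in>carrier_vec n. A *\<^sub>v v = w" using B w by (metis mult_mat_vec_carrier)
  qed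
qed

lemma basis_proper:
  fixes W :: "'a::field vec set"
  assumes W: "subsp n W" and w: "w \<in> carrier_vec n" "w \<notin> W"
  shows "\<exists>k Xm. k < n \<and> Xm \<in> carrier_mat n k \<and> inj_mat Xm \<and> (\<forall>z\<in>carrier_vec k. Xm *\<^sub>v z \<in> W)
     \<and> (\<forall>w\<in>W. \<exists>z\<in>carrier_vec k. w = Xm *\<^sub>v z)"
proof -
  obtain k Xm where Xm: "Xm \<in> carrier_mat n k" "inj_mat Xm" "\<forall>z\<in>carrier_vec k. Xm *\<^sub>v z \<in> W"
     "\<forall>w\<in>W. \<exists>z\<in>carrier_vec k. w = Xm *\<^sub>v z" using basis_exists[OF W] by blast
  have "k \<le> n" using inj_mat_le[OF Xm(1,2)] .
  moreover have "k \<noteq> n"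
  proof
    assume "k = n"
    then obtain v where "v \<in> carrier_vec k" "Xm *\<^sub>v v = w" using sq_inj_surj[of Xm n] Xm w by auto
    then show False using Xm(3) w by auto
  qed
  ultimately show ?thesis using Xm by (intro exI[of _ k] exI[of _ Xm]) auto
qed

lemma inj_mat_mult:
  fixes A :: "'a::field mat"
  assumes "A \<in> carrier_mat n k" "B \<in> carrier_mat k m" "inj_mat A" "inj_mat B"
  shows "inj_mat (A * B)"
  unfolding inj_mat_def
proof (intro ballI impI)
  fix z assume z: "z \<in> carrier_vec (dim_col (A * B))" and "A * B *\<^sub>v z = 0\<^sub>v (dim_row (A * B))"
  then have z': "z \<in> carrier_vec m" and "A *\<^sub>v (B *\<^sub>v z) = 0\<^sub>v n" using assms by auto
  then have "B *\<^sub>v z = 0\<^sub>v k" using inj_matD[OF assms(3,1)] assms by simp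
  then have "z = 0\<^sub>v m" using inj_matD[OF assms(4,2) z'] by simp
  then show "z = 0\<^sub>v (dim_col (A * B))" using assms by simp
qed

lemma inj_mat_pow:
  fixes A :: "'a::field mat"
  assumes "A \<in> carrier_mat n n" "inj_mat A"
  shows "inj_mat (A ^\<^sub>m j)"
proof (induction j)
  case 0
  show ?case using assms unfolding inj_mat_def by auto
next
  case (Suc j)
  then show ?case using inj_mat_mult[of "A ^\<^sub>m j" n n A n] assms by simp
qed

lemma mult_unit_vec_col:
  fixes A :: "'a::field mat"
  assumes "A \<in> carrier_mat nr n" "j < n"
  shows "A *\<^sub>v unit_vec n j = col A j"
proof (rule eq_vecI)
  fix i assume "i < dim_vec (col A j)"
  then have i: "i < nr" using assms by simp
  have "(A *\<^sub>v unit_vec n j) $ i = row A i \<bullet> unit_vec n j" using assms i by simp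
  also have "\<dots> = row A i $ j" by (rule scalar_prod_right_unit[OF assms(2)])
  also have "\<dots> = col A j $ i" using assms i by simp
  finally show "(A *\<^sub>v unit_vec n j) $ i = col A j $ i" .
qed (use assms in simp)

lemma pow_intertwine:
  fixes Xm :: "'a::field mat"
  assumes Xm: "Xm \<in> carrier_mat n k" and N: "N \<in> carrier_mat n n" and M: "M \<in> carrier_mat k k"
    and XM: "Xm * M = N * Xm"
  shows "Xm * M ^\<^sub>m i = N ^\<^sub>m i * Xm"
proof (induction i)
  case 0
  then show ?case using Xm M N by simp
next
  case (Suc i)
  have "Xm * M ^\<^sub>m Suc i = (Xm * M ^\<^sub>m i) * M" using Xm M by (subst assoc_mult_mat[of Xm n k "M ^\<^sub>m i" k M k]) auto
  also have "\<dots> = (N ^\<^sub>m i * Xm) * M" using Suc by simp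
  also have "\<dots> = N ^\<^sub>m i * (Xm * M)" by (rule assoc_mult_mat[of _ n n _ k _ k]) (use Xm M N in auto)
  also have "\<dots> = N ^\<^sub>m i * (N * Xm)" using XM by simp
  also have "\<dots> = N ^\<^sub>m i * N * Xm" by (rule assoc_mult_mat[symmetric, of _ n n _ n _ k]) (use Xm M N in auto)
  finally show ?case by simp
qed

lemma mtr_nilpotent:
  fixes N :: "'a::field mat"
  assumes "N \<in> carrier_mat n n" "N ^\<^sub>m j = 0\<^sub>m n n"
  shows "mtr N = 0"
  using assms
proof (induction n arbitrary: N j rule: less_induct)
  case (less n)
  note N = less.prems(1) and Nj = less.prems(2)
  show ?case
  proof (cases "n = 0")
    case True
    then show ?thesis using N by (simp add: mtr_def)
  next
    case False
    define W where "W = (\<lambda>v. N *\<^sub>v v) ` carrier_vec n"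
    have W: "subsp n W" unfolding subsp_def W_def
    proof (intro conjI ballI allI)
      show "(\<lambda>v. N *\<^sub>v v) ` carrier_vec n \<subseteq> carrier_vec n" using N by auto
      show "0\<^sub>v n \<in> (\<lambda>v. N *\<^sub>v v) ` carrier_vec n"
        using N by (intro image_eqI[of _ _ "0\<^sub>v n"]) auto
      fix x y assume "x \<in> (\<lambda>v. N *\<^sub>v v) ` carrier_vec n" "y \<in> (\<lambda>v. N *\<^sub>v v) ` carrier_vec n"
      then obtain a b where "a \<in> carrier_vec n" "b \<in> carrier_vec n" "x = N *\<^sub>v a" "y = N *\<^sub>v b" by auto
      then show "x + y \<in> (\<lambda>v. N *\<^sub>v v) ` carrier_vec n" using N
        by (intro image_eqI[of _ _ "a + b"]) (auto simp: mult_add_distrib_mat_vec)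
    next
      fix c x assume "x \<in> (\<lambda>v. N *\<^sub>v v) ` carrier_vec n"
      then obtain a where "a \<in> carrier_vec n" "x = N *\<^sub>v a" by auto
      then show "c \<cdot>\<^sub>v x \<in> (\<lambda>v. N *\<^sub>v v) ` carrier_vec n" using N
        by (intro image_eqI[of _ _ "c \<cdot>\<^sub>v a"]) (auto simp: mult_mat_vec)
    qed
    have "\<exists>w\<in>carrier_vec n. w \<notin> W"
    proof (rule ccontr)
      assume "\<not> ?thesis"
      then have "\<forall>w\<in>carrier_vec n. \<exists>v\<in>carrier_vec n. N *\<^sub>v v = w" unfolding W_def by auto
      then have "inj_mat N" using sq_surj_inj[OF N] by simp
      then have "inj_mat (N ^\<^sub>m j)" using inj_mat_pow[OF N] by simp
      then have "inj_mat (0\<^sub>m n n :: 'a mat)" using Nj by simp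
      moreover have "(0\<^sub>m n n :: 'a mat) *\<^sub>v unit_vec n 0 = 0\<^sub>v n" by (intro eq_vecI) auto
      moreover have "unit_vec n 0 \<noteq> (0\<^sub>v n :: 'a vec)" using False by simp
      ultimately show False using inj_matD[of "0\<^sub>m n n :: 'a mat" n n "unit_vec n 0"] by simp
    qed
    then obtain w where w: "w \<in> carrier_vec n" "w \<notin> W" by blast
    obtain k Xm where Xm: "k < n" "Xm \<in> carrier_mat n k" "inj_mat Xm" "\<forall>z\<in>carrier_vec k. Xm *\<^sub>v z \<in> W"
      "\<forall>w\<in>W. \<exists>z\<in>carrier_vec k. w = Xm *\<^sub>v z" using basis_proper[OF W w] by blast
    have "\<exists>Y\<in>carrier_mat k n. N = Xm * Y"
    proof (rule factor_through[OF Xm(2) N], intro allI impI)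
      fix j assume j: "j < n"
      then have "col N j \<in> W" unfolding W_def using mult_unit_vec_col[OF N j]
        by (metis image_eqI unit_vec_carrier)
      then show "\<exists>z\<in>carrier_vec k. col N j = Xm *\<^sub>v z" using Xm(5) by blast
    qed
    then obtain Y where Y: "Y \<in> carrier_mat k n" "N = Xm * Y" by blast
    define M where "M = Y * Xm"
    have Mc: "M \<in> carrier_mat k k" unfolding M_def using Xm Y by simp
    have XM: "Xm * M = N * Xm" unfolding M_def using Xm Y by (simp add: assoc_mult_mat)
    have "Xm * M ^\<^sub>m j = N ^\<^sub>m j * Xm" using pow_intertwine[OF Xm(2) N Mc XM] .
    also have "\<dots> = 0\<^sub>m n k" using Nj Xm by simp
    finally have "M ^\<^sub>m j = 0\<^sub>m k k" using inj_mat_mult_zero[OF Xm(3,2), of "M ^\<^sub>m j" k] Mc by simp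
    then have "mtr M = 0" using less.IH[OF Xm(1) Mc] by simp
    moreover have "mtr N = mtr M" unfolding M_def Y(2) using mtr_mult_comm[OF Xm(2) Y(1)] .
    ultimately show ?thesis by simp
  qed
qed

definition umon :: "nat \<Rightarrow> 'a::field mat set \<Rightarrow> bool" where
  "umon n U \<longleftrightarrow> U \<subseteq> carrier_mat n n \<and> 1\<^sub>m n \<in> U \<and> (\<forall>a\<in>U. \<forall>b\<in>U. a * b \<in> U)
     \<and> (\<forall>u\<in>U. unipotent_mat n u)"

inductive_set spn :: "nat \<Rightarrow> 'a::field mat set \<Rightarrow> 'a mat set" for n U where
  sgen: "u \<in> U \<Longrightarrow> u \<in> spn n U"
| szero: "0\<^sub>m n n \<in> spn n U"
| sadd: "a \<in> spn n U \<Longrightarrow> b \<in> spn n U \<Longrightarrow> a + b \<in> spn n U"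
| ssmult: "a \<in> spn n U \<Longrightarrow> c \<cdot>\<^sub>m a \<in> spn n U"

lemma zero_mat_mult_vec[simp]:
  fixes v :: "'a::comm_ring_1 vec"
  shows "v \<in> carrier_vec n \<Longrightarrow> 0\<^sub>m nr n *\<^sub>v v = 0\<^sub>v nr"
  by (intro eq_vecI) (auto simp: scalar_prod_def)

lemma smult_mat_mult_vec:
  fixes A :: "'a::comm_ring_1 mat"
  shows "A \<in> carrier_mat nr n \<Longrightarrow> v \<in> carrier_vec n \<Longrightarrow> (c \<cdot>\<^sub>m A) *\<^sub>v v = c \<cdot>\<^sub>v (A *\<^sub>v v)"
  by (intro eq_vecI) (auto simp: scalar_prod_def sum_distrib_left mult.assoc)

lemma minus_as_smult:
  fixes a :: "'a::field mat"
  shows "a \<in> carrier_mat n m \<Longrightarrow> b \<in> carrier_mat n m \<Longrightarrow> a - b = a + (- 1) \<cdot>\<^sub>m b"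
  by (intro eq_matI) auto

lemma minus_carrier_mat'[simp]:
  "A \<in> carrier_mat n m \<Longrightarrow> B \<in> carrier_mat n m \<Longrightarrow> A - B \<in> carrier_mat n m"
  by (rule minus_carrier_mat)

lemma spn_carrier:
  assumes "U \<subseteq> carrier_mat n n" "a \<in> spn n U"
  shows "a \<in> carrier_mat n n"
  using assms(2) by (induction rule: spn.induct) (use assms(1) in auto)

lemma spn_mult:
  assumes U: "umon n U" and a: "a \<in> spn n U" and b: "b \<in> spn n U"
  shows "a * b \<in> spn n U"
proof -
  have Uc: "U \<subseteq> carrier_mat n n" using U unfolding umon_def by simp
  have gen: "u * b \<in> spn n U" if u: "u \<in> U" and b: "b \<in> spn n U" for u b
    using b
  proof (induction b rule: spn.induct)
    case (sgen v)
    then show ?case using U u unfolding umon_def by (auto intro: spn.sgen)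
  next
    case szero
    have "u * 0\<^sub>m n n = 0\<^sub>m n n" using u Uc by auto
    then show ?case using spn.szero by metis
  next
    case (sadd b1 b2)
    have "u * (b1 + b2) = u * b1 + u * b2" using u Uc sadd spn_carrier[OF Uc]
      by (meson mult_add_distrib_mat subsetD)
    then show ?case using sadd spn.sadd by metis
  next
    case (ssmult b c)
    have "u * (c \<cdot>\<^sub>m b) = c \<cdot>\<^sub>m (u * b)" using u Uc ssmult spn_carrier[OF Uc]
      by (meson mult_smult_distrib subsetD)
    then show ?case using ssmult spn.ssmult by metis
  qed
  show ?thesis using a
  proof (induction a rule: spn.induct)
    case (sgen u)
    then show ?case using gen b by simp
  next
    case szero
    have "0\<^sub>m n n * b = 0\<^sub>m n n" using spn_carrier[OF Uc b] by auto
    then show ?case using spn.szero by metis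
  next
    case (sadd a1 a2)
    have "(a1 + a2) * b = a1 * b + a2 * b" using b sadd spn_carrier[OF Uc]
      by (meson add_mult_distrib_mat)
    then show ?case using sadd spn.sadd by metis
  next
    case (ssmult a c)
    have "(c \<cdot>\<^sub>m a) * b = c \<cdot>\<^sub>m (a * b)" using b ssmult spn_carrier[OF Uc]
      by (meson mult_smult_assoc_mat)
    then show ?case using ssmult spn.ssmult by metis
  qed
qed

lemma spn_minus:
  assumes Uc: "U \<subseteq> carrier_mat n n" and a: "a \<in> spn n U" and b: "b \<in> spn n U"
  shows "a - b \<in> spn n U"
  using minus_as_smult[OF spn_carrier[OF Uc a] spn_carrier[OF Uc b]] a b
  by (metis spn.sadd spn.ssmult)

lemma unip_trace:
  fixes w :: "'a::field mat"
  assumes w: "w \<in> carrier_mat n n" and "unipotent_mat n w"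
  shows "mtr w = of_nat n"
proof -
  obtain k where "(w - 1\<^sub>m n) ^\<^sub>m k = 0\<^sub>m n n" using assms(2) unfolding unipotent_mat_def by blast
  then have "mtr (w - 1\<^sub>m n) = 0" using mtr_nilpotent[of "w - 1\<^sub>m n" n k] w by simp
  then show ?thesis using mtr_minus[OF w one_carrier_mat] mtr_one[of n] by simp
qed

lemma spn_trace:
  assumes U: "umon n U" and a: "a \<in> spn n U" and u: "u \<in> U"
  shows "mtr (a * (u - 1\<^sub>m n)) = 0"
  using a
proof (induction a rule: spn.induct)
  case (sgen s)
  have Uc: "U \<subseteq> carrier_mat n n" using U unfolding umon_def by simp
  have sc: "s \<in> carrier_mat n n" and uc: "u \<in> carrier_mat n n" using sgen u Uc by auto
  have "s * (u - 1\<^sub>m n) = s * u - s" using sc uc by (simp add: mult_minus_distrib_mat)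
  moreover have "s * u \<in> U" using U sgen u unfolding umon_def by simp
  ultimately have "mtr (s * (u - 1\<^sub>m n)) = mtr (s * u) - mtr s"
    using mtr_minus[of "s * u" n s] sc uc by simp
  also have "\<dots> = 0" using unip_trace[of "s * u" n] unip_trace[of s n] U sgen \<open>s * u \<in> U\<close> sc uc
    unfolding umon_def by simp
  finally show ?case .
next
  case szero
  have "0\<^sub>m n n * (u - 1\<^sub>m n) = (0\<^sub>m n n :: 'a mat)" by (intro eq_matI) auto
  then show ?case by (simp add: mtr_zero)
next
  case (sadd a b)
  have Uc: "U \<subseteq> carrier_mat n n" using U unfolding umon_def by simp
  have ac: "a \<in> carrier_mat n n" "b \<in> carrier_mat n n" "u \<in> carrier_mat n n"
    using sadd spn_carrier[OF Uc] u Uc by auto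
  have "(a + b) * (u - 1\<^sub>m n) = a * (u - 1\<^sub>m n) + b * (u - 1\<^sub>m n)" using ac
    by (meson add_mult_distrib_mat minus_carrier_mat one_carrier_mat)
  then show ?case using sadd mtr_add[of "a * (u - 1\<^sub>m n)" n "b * (u - 1\<^sub>m n)"] ac by simp
next
  case (ssmult a c)
  have Uc: "U \<subseteq> carrier_mat n n" using U unfolding umon_def by simp
  have ac: "a \<in> carrier_mat n n" "u \<in> carrier_mat n n" using ssmult spn_carrier[OF Uc] u Uc by auto
  have "(c \<cdot>\<^sub>m a) * (u - 1\<^sub>m n) = c \<cdot>\<^sub>m (a * (u - 1\<^sub>m n))" using ac
    by (meson mult_smult_assoc_mat minus_carrier_mat one_carrier_mat)
  then show ?case using ssmult mtr_smult[of "a * (u - 1\<^sub>m n)" n c] ac by simp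
qed

lemma image_subsp:
  fixes N :: "'a::field mat"
  assumes N: "N \<in> carrier_mat n m"
  shows "subsp n ((\<lambda>v. N *\<^sub>v v) ` carrier_vec m)"
  unfolding subsp_def
proof (intro conjI ballI allI)
  show "(\<lambda>v. N *\<^sub>v v) ` carrier_vec m \<subseteq> carrier_vec n" using N by auto
  show "0\<^sub>v n \<in> (\<lambda>v. N *\<^sub>v v) ` carrier_vec m"
    using N by (intro image_eqI[of _ _ "0\<^sub>v m"]) auto
  fix x y assume "x \<in> (\<lambda>v. N *\<^sub>v v) ` carrier_vec m" "y \<in> (\<lambda>v. N *\<^sub>v v) ` carrier_vec m"
  then obtain a b where "a \<in> carrier_vec m" "b \<in> carrier_vec m" "x = N *\<^sub>v a" "y = N *\<^sub>v b" by auto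
  then show "x + y \<in> (\<lambda>v. N *\<^sub>v v) ` carrier_vec m" using N
    by (intro image_eqI[of _ _ "a + b"]) (auto simp: mult_add_distrib_mat_vec)
next
  fix c x assume "x \<in> (\<lambda>v. N *\<^sub>v v) ` carrier_vec m"
  then obtain a where "a \<in> carrier_vec m" "x = N *\<^sub>v a" by auto
  then show "c \<cdot>\<^sub>v x \<in> (\<lambda>v. N *\<^sub>v v) ` carrier_vec m" using N
    by (intro image_eqI[of _ _ "c \<cdot>\<^sub>v a"]) (auto simp: mult_mat_vec)
qed

definition rrep :: "'a::field mat \<Rightarrow> nat \<Rightarrow> 'a mat \<Rightarrow> 'a mat" where
  "rrep Xm k u = (SOME M. M \<in> carrier_mat k k \<and> u * Xm = Xm * M)"

lemma restrict_rep:
  fixes Xm :: "'a::field mat"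
  assumes U: "umon n U" and Xm: "Xm \<in> carrier_mat n k" "inj_mat Xm"
    and inv: "\<forall>u\<in>U. \<forall>z\<in>carrier_vec k. \<exists>z'\<in>carrier_vec k. u *\<^sub>v (Xm *\<^sub>v z) = Xm *\<^sub>v z'"
  shows "\<forall>u\<in>U. rrep Xm k u \<in> carrier_mat k k \<and> u * Xm = Xm * rrep Xm k u"
    and "umon k (rrep Xm k ` U)"
proof -
  have Uc: "U \<subseteq> carrier_mat n n" using U unfolding umon_def by simp
  show R: "\<forall>u\<in>U. rrep Xm k u \<in> carrier_mat k k \<and> u * Xm = Xm * rrep Xm k u"
  proof
    fix u assume u: "u \<in> U"
    have uc: "u \<in> carrier_mat n n" using u Uc by auto
    have "\<exists>Y\<in>carrier_mat k k. u * Xm = Xm * Y"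
    proof (rule factor_through[OF Xm(1)], use uc Xm in simp, intro allI impI)
      fix j assume j: "j < k"
      have "col (u * Xm) j = u *\<^sub>v (Xm *\<^sub>v unit_vec k j)"
        using col_mult2[OF uc Xm(1) j] mult_unit_vec_col[OF Xm(1) j] by simp
      then show "\<exists>z\<in>carrier_vec k. col (u * Xm) j = Xm *\<^sub>v z" using inv u by simp
    qed
    then have "\<exists>M. M \<in> carrier_mat k k \<and> u * Xm = Xm * M" by blast
    from someI_ex[OF this] show "rrep Xm k u \<in> carrier_mat k k \<and> u * Xm = Xm * rrep Xm k u"
      unfolding rrep_def .
  qed
  have R1: "rrep Xm k (1\<^sub>m n) = 1\<^sub>m k"
  proof -
    have "1\<^sub>m n \<in> U" using U unfolding umon_def by simp
    then have "Xm * rrep Xm k (1\<^sub>m n) = Xm * 1\<^sub>m k" using R Xm by auto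
    then show ?thesis using inj_mat_cancel[OF Xm(2,1)] R \<open>1\<^sub>m n \<in> U\<close> by auto
  qed
  have Rm: "rrep Xm k (a * b) = rrep Xm k a * rrep Xm k b" if a: "a \<in> U" and b: "b \<in> U" for a b
  proof -
    have ab: "a * b \<in> U" using U a b unfolding umon_def by simp
    have ac: "a \<in> carrier_mat n n" "b \<in> carrier_mat n n" using a b Uc by auto
    have Ra: "rrep Xm k a \<in> carrier_mat k k" "a * Xm = Xm * rrep Xm k a" using R a by auto
    have Rb: "rrep Xm k b \<in> carrier_mat k k" "b * Xm = Xm * rrep Xm k b" using R b by auto
    have "Xm * (rrep Xm k a * rrep Xm k b) = (Xm * rrep Xm k a) * rrep Xm k b"
      using Xm Ra Rb by (simp add: assoc_mult_mat)
    also have "\<dots> = (a * Xm) * rrep Xm k b" using Ra by simp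
    also have "\<dots> = a * (Xm * rrep Xm k b)" using Xm Ra(1) Rb(1) ac by (simp add: assoc_mult_mat)
    also have "\<dots> = a * (b * Xm)" using Rb by simp
    also have "\<dots> = (a * b) * Xm" using Xm ac by (simp add: assoc_mult_mat)
    also have "\<dots> = Xm * rrep Xm k (a * b)" using R ab by simp
    finally show ?thesis using inj_mat_cancel[OF Xm(2,1)] Ra Rb R ab by (metis mult_carrier_mat)
  qed
  have Ru: "unipotent_mat k (rrep Xm k u)" if u: "u \<in> U" for u
  proof -
    have uc: "u \<in> carrier_mat n n" using u Uc by auto
    have Ru: "rrep Xm k u \<in> carrier_mat k k" "u * Xm = Xm * rrep Xm k u" using R u by auto
    obtain j where j: "(u - 1\<^sub>m n) ^\<^sub>m j = 0\<^sub>m n n" using U u unfolding umon_def unipotent_mat_def by blast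
    have "Xm * (rrep Xm k u - 1\<^sub>m k) = Xm * rrep Xm k u - Xm * 1\<^sub>m k"
      using Xm Ru by (simp add: mult_minus_distrib_mat)
    also have "\<dots> = u * Xm - 1\<^sub>m n * Xm" using Xm Ru by simp
    also have "\<dots> = (u - 1\<^sub>m n) * Xm" using Xm uc by (simp add: minus_mult_distrib_mat)
    finally have XM: "Xm * (rrep Xm k u - 1\<^sub>m k) = (u - 1\<^sub>m n) * Xm" .
    have "Xm * (rrep Xm k u - 1\<^sub>m k) ^\<^sub>m j = (u - 1\<^sub>m n) ^\<^sub>m j * Xm"
      using pow_intertwine[OF Xm(1) _ _ XM] uc Ru by simp
    also have "\<dots> = 0\<^sub>m n k" using j Xm by simp
    finally have "(rrep Xm k u - 1\<^sub>m k) ^\<^sub>m j = 0\<^sub>m k k"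
      using inj_mat_mult_zero[OF Xm(2,1), of "(rrep Xm k u - 1\<^sub>m k) ^\<^sub>m j" k] Ru by simp
    then show ?thesis unfolding unipotent_mat_def by blast
  qed
  show "umon k (rrep Xm k ` U)" unfolding umon_def
  proof (intro conjI)
    show "rrep Xm k ` U \<subseteq> carrier_mat k k" using R by auto
    show "1\<^sub>m k \<in> rrep Xm k ` U" using R1 U unfolding umon_def by (metis image_eqI)
    show "\<forall>a\<in>rrep Xm k ` U. \<forall>b\<in>rrep Xm k ` U. a * b \<in> rrep Xm k ` U"
    proof (intro ballI)
      fix a b assume "a \<in> rrep Xm k ` U" "b \<in> rrep Xm k ` U"
      then obtain a' b' where "a' \<in> U" "b' \<in> U" "a = rrep Xm k a'" "b = rrep Xm k b'" by blast
      then show "a * b \<in> rrep Xm k ` U" using Rm U unfolding umon_def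
        by (metis image_eqI)
    qed
    show "\<forall>u\<in>rrep Xm k ` U. unipotent_mat k u" using Ru by blast
  qed
qed

lemma eigen_exists:
  fixes M :: "'a::alg_closed_field mat"
  assumes M: "M \<in> carrier_mat r r" and r: "r > 0"
  shows "\<exists>lam z. z \<in> carrier_vec r \<and> z \<noteq> 0\<^sub>v r \<and> M *\<^sub>v z = lam \<cdot>\<^sub>v z"
proof -
  have "Polynomial.degree (char_poly M) > 0" using degree_monic_char_poly[OF M] r by simp
  then obtain x where "poly (char_poly M) x = 0" using alg_closed_imp_poly_has_root by blast
  then have "eigenvalue M x" using eigenvalue_root_char_poly[OF M] by simp
  then show ?thesis unfolding eigenvalue_def eigenvector_def using M by auto
qed

lemma assoc_mm:
  fixes A :: "'a::semiring_1 mat"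
  shows "dim_col A = dim_row B \<Longrightarrow> dim_col B = dim_row C \<Longrightarrow> A * B * C = A * (B * C)"
  by (rule assoc_mult_mat[of A "dim_row A" "dim_col A" B "dim_col B" C "dim_col C"]) auto

lemma assoc_mv:
  fixes A :: "'a::semiring_1 mat"
  shows "dim_col A = dim_row B \<Longrightarrow> dim_col B = dim_vec v \<Longrightarrow> A * B *\<^sub>v v = A *\<^sub>v (B *\<^sub>v v)"
  by (rule assoc_mult_mat_vec[of A "dim_row A" "dim_col A" B "dim_col B" v]) auto

lemma mat_zero_inner:
  fixes Xm :: "'a::field mat"
  assumes "Xm \<in> carrier_mat n 0" "Y \<in> carrier_mat 0 m"
  shows "Xm * Y = 0\<^sub>m n m"
  using assms by (intro eq_matI) (auto simp: scalar_prod_def)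

lemma mat_eq_from_minus:
  fixes a :: "'a::field mat"
  assumes "a \<in> carrier_mat n m" "b \<in> carrier_mat n m" "a - b = 0\<^sub>m n m"
  shows "a = b"
proof (rule eq_matI)
  fix i j assume ij: "i < dim_row b" "j < dim_col b"
  have "(a - b) $$ (i,j) = a $$ (i,j) - b $$ (i,j)" using assms(2) ij by simp
  moreover have "(a - b) $$ (i,j) = 0" using assms(2,3) ij by simp
  ultimately show "a $$ (i,j) = b $$ (i,j)" by simp
qed (use assms in auto)

lemma transitive_trivial:
  fixes U :: "'a::alg_closed_field mat set"
  assumes U: "umon n U" and n: "0 < n"
    and trans: "\<forall>v\<in>carrier_vec n. v \<noteq> 0\<^sub>v n \<longrightarrow> (\<forall>w\<in>carrier_vec n. \<exists>a\<in>spn n U. a *\<^sub>v v = w)"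
    and u: "u \<in> U" and x: "x \<in> carrier_vec n"
  shows "u *\<^sub>v x = x"
proof -
  have Uc: "U \<subseteq> carrier_mat n n" using U unfolding umon_def by simp
  have one: "1\<^sub>m n \<in> U" using U unfolding umon_def by simp
  have uc: "u \<in> carrier_mat n n" using u Uc by auto
  define RS where "RS = {r. \<exists>T\<in>spn n U. T \<noteq> 0\<^sub>m n n \<and> (\<exists>Xm\<in>carrier_mat n r. \<exists>Y\<in>carrier_mat r n. T = Xm * Y)}"
  have "n \<in> RS"
  proof -
    have "(1\<^sub>m n :: 'a mat) \<noteq> 0\<^sub>m n n"
    proof
      assume "(1\<^sub>m n :: 'a mat) = 0\<^sub>m n n"
      then have "(1\<^sub>m n :: 'a mat) $$ (0,0) = 0\<^sub>m n n $$ (0,0)" by simp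
      then show False using n by simp
    qed
    moreover have "(1\<^sub>m n :: 'a mat) = 1\<^sub>m n * 1\<^sub>m n" by simp
    moreover have "(1\<^sub>m n :: 'a mat) \<in> spn n U" using one by (rule spn.sgen)
    ultimately show ?thesis unfolding RS_def using one_carrier_mat[of n] by blast
  qed
  define r where "r = (LEAST r. r \<in> RS)"
  have "r \<in> RS" unfolding r_def using \<open>n \<in> RS\<close> by (rule LeastI)
  then obtain T Xm Y where T: "T \<in> spn n U" "T \<noteq> 0\<^sub>m n n" and Xm: "Xm \<in> carrier_mat n r"
    and Y: "Y \<in> carrier_mat r n" and TXY: "T = Xm * Y" unfolding RS_def by blast
  have rmin: "\<And>r'. r' \<in> RS \<Longrightarrow> r \<le> r'" unfolding r_def by (rule Least_le)
  have Tc: "T \<in> carrier_mat n n" using spn_carrier[OF Uc T(1)] .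
  have r0: "0 < r"
  proof (rule ccontr)
    assume "\<not> 0 < r"
    then have "r = 0" by simp
    then have "T = 0\<^sub>m n n" using TXY mat_zero_inner[of Xm n Y n] Xm Y by simp
    then show False using T by simp
  qed
  have TAT: "\<exists>lam. T * A * T = lam \<cdot>\<^sub>m T" if A: "A \<in> spn n U" for A
  proof -
    have Ac: "A \<in> carrier_mat n n" using spn_carrier[OF Uc A] .
    define M where "M = Y * A * Xm"
    have Mc: "M \<in> carrier_mat r r" unfolding M_def using Xm Y Ac by simp
    obtain lam z where z: "z \<in> carrier_vec r" "z \<noteq> 0\<^sub>v r" "M *\<^sub>v z = lam \<cdot>\<^sub>v z"
      using eigen_exists[OF Mc r0] by blast
    define S where "S = M - lam \<cdot>\<^sub>m 1\<^sub>m r"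
    have Sc: "S \<in> carrier_mat r r" unfolding S_def using Mc by simp
    have Sz: "S *\<^sub>v z = 0\<^sub>v r"
    proof -
      have "S *\<^sub>v z = M *\<^sub>v z - (lam \<cdot>\<^sub>m 1\<^sub>m r) *\<^sub>v z"
        unfolding S_def using Mc z by (simp add: minus_mult_distrib_mat_vec)
      also have "\<dots> = lam \<cdot>\<^sub>v z - lam \<cdot>\<^sub>v z" using z smult_mat_mult_vec[of "1\<^sub>m r" r r z lam] by simp
      also have "\<dots> = 0\<^sub>v r" using z by simp
      finally show ?thesis .
    qed
    have "\<exists>w\<in>carrier_vec r. w \<notin> (\<lambda>v. S *\<^sub>v v) ` carrier_vec r"
    proof (rule ccontr)
      assume "\<not> ?thesis"
      then have "\<forall>w\<in>carrier_vec r. \<exists>v\<in>carrier_vec r. S *\<^sub>v v = w" by auto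
      then have "inj_mat S" using sq_surj_inj[OF Sc] by simp
      then show False using inj_matD[OF _ Sc z(1) Sz] z(2) by simp
    qed
    then obtain w where w: "w \<in> carrier_vec r" "w \<notin> (\<lambda>v. S *\<^sub>v v) ` carrier_vec r" by blast
    obtain k1 X1 where X1: "k1 < r" "X1 \<in> carrier_mat r k1" "inj_mat X1"
      "\<forall>z\<in>carrier_vec k1. X1 *\<^sub>v z \<in> (\<lambda>v. S *\<^sub>v v) ` carrier_vec r"
      "\<forall>w\<in>(\<lambda>v. S *\<^sub>v v) ` carrier_vec r. \<exists>z\<in>carrier_vec k1. w = X1 *\<^sub>v z"
      using basis_proper[OF image_subsp[OF Sc] w] by blast
    have "\<exists>Y1\<in>carrier_mat k1 r. S = X1 * Y1"
    proof (rule factor_through[OF X1(2) Sc], intro allI impI)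
      fix j assume j: "j < r"
      have "col S j \<in> (\<lambda>v. S *\<^sub>v v) ` carrier_vec r"
        using mult_unit_vec_col[OF Sc j] by (metis image_eqI unit_vec_carrier)
      then show "\<exists>z\<in>carrier_vec k1. col S j = X1 *\<^sub>v z" using X1(5) by blast
    qed
    then obtain Y1 where Y1: "Y1 \<in> carrier_mat k1 r" "S = X1 * Y1" by blast
    have c1: "Y * A \<in> carrier_mat r n" "A * Xm \<in> carrier_mat n r" "Xm * Y \<in> carrier_mat n n"
      "Y * (A * Xm) \<in> carrier_mat r r" "Y * A * Xm \<in> carrier_mat r r" "Xm * (Y * A) \<in> carrier_mat n n"
      "A * (Xm * Y) \<in> carrier_mat n n" "Y * (A * (Xm * Y)) \<in> carrier_mat r n"
      "(Y * (A * Xm)) * Y \<in> carrier_mat r n" "A * Xm * Y \<in> carrier_mat n n"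
      using Xm Y Ac by auto
    have e1: "T * A * T = Xm * M * Y" unfolding TXY M_def using carrier_matD[OF Xm] carrier_matD[OF Y] carrier_matD[OF Ac] by (simp add: assoc_mm)
    have "Xm * (lam \<cdot>\<^sub>m 1\<^sub>m r) = lam \<cdot>\<^sub>m Xm"
      using mult_smult_distrib[OF Xm one_carrier_mat, of lam] Xm by simp
    then have e2: "lam \<cdot>\<^sub>m T = Xm * (lam \<cdot>\<^sub>m 1\<^sub>m r) * Y"
      unfolding TXY using mult_smult_assoc_mat[OF Xm Y, of lam] by simp
    have Lc: "lam \<cdot>\<^sub>m 1\<^sub>m r \<in> carrier_mat r r" by simp
    have "Xm * S = Xm * M - Xm * (lam \<cdot>\<^sub>m 1\<^sub>m r)" unfolding S_def
      by (rule mult_minus_distrib_mat[OF Xm Mc Lc])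
    then have "Xm * S * Y = (Xm * M - Xm * (lam \<cdot>\<^sub>m 1\<^sub>m r)) * Y"
      by (rule arg_cong[where f="\<lambda>Z. Z * Y"])
    also have "\<dots> = Xm * M * Y - Xm * (lam \<cdot>\<^sub>m 1\<^sub>m r) * Y"
      by (rule minus_mult_distrib_mat[of "Xm * M" n r "Xm * (lam \<cdot>\<^sub>m 1\<^sub>m r)" Y n]) (use Xm Y Mc Lc in auto)
    finally have "Xm * S * Y = Xm * M * Y - Xm * (lam \<cdot>\<^sub>m 1\<^sub>m r) * Y" .
    then have e3: "Xm * M * Y - Xm * (lam \<cdot>\<^sub>m 1\<^sub>m r) * Y = Xm * S * Y" by simp
    have e4: "Xm * S * Y = (Xm * X1) * (Y1 * Y)" unfolding Y1(2)
      using carrier_matD[OF Xm] carrier_matD[OF Y] carrier_matD[OF X1(2)] carrier_matD[OF Y1(1)] by (simp add: assoc_mm)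
    have eq: "T * A * T - lam \<cdot>\<^sub>m T = (Xm * X1) * (Y1 * Y)" using e1 e2 e3 e4 by simp
    have mem: "T * A * T - lam \<cdot>\<^sub>m T \<in> spn n U"
      using spn_minus[OF Uc spn_mult[OF U spn_mult[OF U T(1) A] T(1)] spn.ssmult[OF T(1)]] .
    have "T * A * T - lam \<cdot>\<^sub>m T = 0\<^sub>m n n"
    proof (rule ccontr)
      assume ne: "T * A * T - lam \<cdot>\<^sub>m T \<noteq> 0\<^sub>m n n"
      have "Xm * X1 \<in> carrier_mat n k1" "Y1 * Y \<in> carrier_mat k1 n" using Xm X1 Y Y1 by auto
      then have "k1 \<in> RS" unfolding RS_def using mem ne eq by blast
      then show False using rmin X1(1) by fastforce
    qed
    then have "T * A * T = lam \<cdot>\<^sub>m T" using mat_eq_from_minus[of "T * A * T" n n "lam \<cdot>\<^sub>m T"] Tc Ac by simp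
    then show ?thesis by blast
  qed
  obtain j where j: "j < n" "col T j \<noteq> 0\<^sub>v n"
  proof (rule ccontr)
    assume "\<not> thesis"
    then have "\<forall>j<n. col T j = 0\<^sub>v n" using that by blast
    then have "T = 0\<^sub>m n n"
    proof (intro eq_matI)
      fix i l assume il: "i < dim_row (0\<^sub>m n n :: 'a mat)" "l < dim_col (0\<^sub>m n n :: 'a mat)"
      then have "col T l $ i = 0" using \<open>\<forall>j<n. col T j = 0\<^sub>v n\<close> by simp
      then show "T $$ (i,l) = 0\<^sub>m n n $$ (i,l)" using il Tc by simp
    qed (use Tc in auto)
    then show False using T by simp
  qed
  define w0 where "w0 = T *\<^sub>v unit_vec n j"
  have w0: "w0 \<in> carrier_vec n" "w0 \<noteq> 0\<^sub>v n" unfolding w0_def using j mult_unit_vec_col[OF Tc j(1)] Tc by auto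
  have Tline: "\<exists>c. T *\<^sub>v y = c \<cdot>\<^sub>v w0" if y: "y \<in> carrier_vec n" for y
  proof -
    obtain A where A: "A \<in> spn n U" "A *\<^sub>v w0 = y" using trans w0 y by blast
    have Ac: "A \<in> carrier_mat n n" using spn_carrier[OF Uc A(1)] .
    obtain lam where lam: "T * A * T = lam \<cdot>\<^sub>m T" using TAT[OF A(1)] by blast
    have "T *\<^sub>v y = (T * A * T) *\<^sub>v unit_vec n j" unfolding A(2)[symmetric] w0_def
      using carrier_matD[OF Tc] carrier_matD[OF Ac] by (simp add: assoc_mv)
    also have "\<dots> = lam \<cdot>\<^sub>v w0" unfolding lam w0_def using smult_mat_mult_vec[OF Tc unit_vec_carrier[of n j]] by simp
    finally show ?thesis by blast
  qed
  define cv where "cv = vec n (\<lambda>l. SOME c. T *\<^sub>v unit_vec n l = c \<cdot>\<^sub>v w0)"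
  have cvl: "T *\<^sub>v unit_vec n l = (cv $ l) \<cdot>\<^sub>v w0" if l: "l < n" for l
    unfolding cv_def using someI_ex[OF Tline[OF unit_vec_carrier[of n l]]] l by simp
  have Tform: "T $$ (i,l) = w0 $ i * cv $ l" if il: "i < n" "l < n" for i l
  proof -
    have "T $$ (i,l) = (T *\<^sub>v unit_vec n l) $ i" using mult_unit_vec_col[OF Tc il(2)] il Tc by simp
    also have "\<dots> = cv $ l * w0 $ i" using cvl[OF il(2)] il w0 by simp
    finally show ?thesis by (simp add: mult.commute)
  qed
  have trT: "mtr (T * Z) = cv \<bullet> (Z *\<^sub>v w0)" if Z: "Z \<in> carrier_mat n n" for Z
  proof -
    have "mtr (T * Z) = (\<Sum>i<n. \<Sum>l<n. T $$ (i,l) * Z $$ (l,i))"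
      using Tc Z by (simp add: mtr_def scalar_prod_def atLeast0LessThan)
    also have "\<dots> = (\<Sum>i<n. \<Sum>l<n. cv $ l * (Z $$ (l,i) * w0 $ i))"
      by (intro sum.cong refl) (simp add: Tform mult_ac)
    also have "\<dots> = (\<Sum>l<n. \<Sum>i<n. cv $ l * (Z $$ (l,i) * w0 $ i))" by (rule sum.swap)
    also have "\<dots> = cv \<bullet> (Z *\<^sub>v w0)"
      using Z w0 by (simp add: scalar_prod_def atLeast0LessThan cv_def sum_distrib_left)
    finally show ?thesis .
  qed
  show ?thesis
  proof (rule ccontr)
    assume ux: "u *\<^sub>v x \<noteq> x"
    define y where "y = (u - 1\<^sub>m n) *\<^sub>v x"
    have yc: "y \<in> carrier_vec n" unfolding y_def using mult_mat_vec_carrier[of "u - 1\<^sub>m n" n n x] uc x by simp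
    have y0: "y \<noteq> 0\<^sub>v n"
    proof
      assume "y = 0\<^sub>v n"
      then have "u *\<^sub>v x - x = 0\<^sub>v n" unfolding y_def using uc x by (simp add: minus_mult_distrib_mat_vec)
      note h = this
      have "u *\<^sub>v x = x"
      proof (rule eq_vecI)
        fix i assume i: "i < dim_vec x"
        have "(u *\<^sub>v x - x) $ i = (u *\<^sub>v x) $ i - x $ i" using i by simp
        moreover have "(u *\<^sub>v x - x) $ i = 0" using h i x by simp
        ultimately show "(u *\<^sub>v x) $ i = x $ i" by simp
      qed (use uc x in simp)
      then show False using ux by simp
    qed
    obtain A where A: "A \<in> spn n U" "A *\<^sub>v w0 = x" using trans w0 x by blast
    have Ac: "A \<in> carrier_mat n n" using spn_carrier[OF Uc A(1)] .
    have orth: "cv \<bullet> (A' *\<^sub>v y) = 0" if A': "A' \<in> spn n U" for A'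
    proof -
      have A'c: "A' \<in> carrier_mat n n" using spn_carrier[OF Uc A'] .
      have P: "A * T * A' \<in> spn n U" using spn_mult[OF U spn_mult[OF U A(1) T(1)] A'] .
      have "0 = mtr (A * T * A' * (u - 1\<^sub>m n))" using spn_trace[OF U P u] by simp
      also have "A * T * A' * (u - 1\<^sub>m n) = A * (T * A' * (u - 1\<^sub>m n))"
        using carrier_matD[OF Ac] carrier_matD[OF Tc] carrier_matD[OF A'c] carrier_matD[OF uc] by (simp add: assoc_mm)
      also have "mtr \<dots> = mtr ((T * A' * (u - 1\<^sub>m n)) * A)"
        by (rule mtr_mult_comm[of _ n n]) (use Ac Tc A'c uc in auto)
      also have "(T * A' * (u - 1\<^sub>m n)) * A = T * (A' * (u - 1\<^sub>m n) * A)"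
        using carrier_matD[OF Ac] carrier_matD[OF Tc] carrier_matD[OF A'c] carrier_matD[OF uc] by (simp add: assoc_mm)
      also have "mtr \<dots> = cv \<bullet> ((A' * (u - 1\<^sub>m n) * A) *\<^sub>v w0)"
        by (rule trT) (use Ac A'c uc in auto)
      also have "(A' * (u - 1\<^sub>m n) * A) *\<^sub>v w0 = A' *\<^sub>v y"
      proof -
        have um: "u - 1\<^sub>m n \<in> carrier_mat n n" using uc by simp
        have c1: "A' * (u - 1\<^sub>m n) \<in> carrier_mat n n" using mult_carrier_mat[OF A'c um] .
        have "(A' * (u - 1\<^sub>m n) * A) *\<^sub>v w0 = (A' * (u - 1\<^sub>m n)) *\<^sub>v (A *\<^sub>v w0)"
          using assoc_mult_mat_vec[OF c1 Ac w0(1)] .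
        also have "\<dots> = A' *\<^sub>v ((u - 1\<^sub>m n) *\<^sub>v (A *\<^sub>v w0))"
          using assoc_mult_mat_vec[OF A'c um mult_mat_vec_carrier[OF Ac w0(1)]] .
        finally show ?thesis using A(2) unfolding y_def by simp
      qed
      finally show ?thesis by simp
    qed
    have "cv = 0\<^sub>v n"
    proof (rule eq_vecI)
      fix l assume "l < dim_vec (0\<^sub>v n :: 'a vec)"
      then have l: "l < n" by simp
      have "\<exists>a\<in>spn n U. a *\<^sub>v y = unit_vec n l"
        using trans yc y0 unit_vec_carrier[of n l] by blast
      then obtain A' where A': "A' \<in> spn n U" "A' *\<^sub>v y = unit_vec n l" by blast
      have "cv \<bullet> unit_vec n l = 0" using orth[OF A'(1)] A'(2) by simp
      then show "cv $ l = 0\<^sub>v n $ l" using l by simp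
    qed (simp add: cv_def)
    then have "T = 0\<^sub>m n n"
    proof -
      assume cv0: "cv = 0\<^sub>v n"
      show ?thesis
      proof (rule eq_matI)
        fix i l assume il: "i < dim_row (0\<^sub>m n n :: 'a mat)" "l < dim_col (0\<^sub>m n n :: 'a mat)"
        then have "T $$ (i,l) = w0 $ i * cv $ l" using Tform by simp
        also have "cv $ l = 0" using cv0 il by simp
        finally show "T $$ (i,l) = 0\<^sub>m n n $$ (i,l)" using il by simp
      qed (use Tc in auto)
    qed
    then show False using T by simp
  qed
qed

fun mprod :: "nat \<Rightarrow> 'a::semiring_1 mat list \<Rightarrow> 'a mat" where
  "mprod n [] = 1\<^sub>m n"
| "mprod n (A # As) = A * mprod n As"

lemma mprod_carrier: "set As \<subseteq> carrier_mat n n \<Longrightarrow> mprod n As \<in> carrier_mat n n"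
  by (induction As) auto

lemma mprod_snoc:
  assumes "set As \<subseteq> carrier_mat n n" "B \<in> carrier_mat n n"
  shows "mprod n (As @ [B]) = mprod n As * B"
  using assms
proof (induction As)
  case Nil
  then show ?case by simp
next
  case (Cons A As)
  then have IH: "mprod n (As @ [B]) = mprod n As * B" by simp
  have Ac: "A \<in> carrier_mat n n" and Pc: "mprod n As \<in> carrier_mat n n"
    using Cons.prems mprod_carrier[of As n] by auto
  have "mprod n ((A # As) @ [B]) = A * (mprod n As * B)" using IH by simp
  also have "\<dots> = A * mprod n As * B" using assoc_mult_mat[OF Ac Pc Cons.prems(2)] by simp
  finally show ?case by simp
qed

lemma pow_commute:
  fixes B :: "'a::semiring_1 mat"
  assumes B: "B \<in> carrier_mat n n"
  shows "B * B ^\<^sub>m j = B ^\<^sub>m j * B"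
proof (induction j)
  case 0
  then show ?case using B by simp
next
  case (Suc j)
  have Bj: "B ^\<^sub>m j \<in> carrier_mat n n" using B by simp
  have "B * B ^\<^sub>m Suc j = B * (B ^\<^sub>m j * B)" by simp
  also have "\<dots> = (B * B ^\<^sub>m j) * B" using assoc_mult_mat[OF B Bj B] by simp
  also have "\<dots> = (B ^\<^sub>m j * B) * B" using Suc by simp
  finally show ?case by simp
qed

lemma transpose_pow:
  fixes A :: "'a::comm_ring_1 mat"
  assumes A: "A \<in> carrier_mat n n"
  shows "transpose_mat (A ^\<^sub>m j) = transpose_mat A ^\<^sub>m j"
proof (induction j)
  case 0
  then show ?case using A by simp
next
  case (Suc j)
  have Aj: "A ^\<^sub>m j \<in> carrier_mat n n" using A by simp
  have "transpose_mat (A ^\<^sub>m Suc j) = transpose_mat A * transpose_mat (A ^\<^sub>m j)"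
    using transpose_mult[OF Aj A] by simp
  also have "\<dots> = transpose_mat A * transpose_mat A ^\<^sub>m j" using Suc by simp
  also have "\<dots> = transpose_mat A ^\<^sub>m j * transpose_mat A"
    using pow_commute[of "transpose_mat A" n j] A by simp
  finally show ?case by simp
qed

lemma umon_transpose:
  fixes U :: "'a::field mat set"
  assumes U: "umon n U"
  shows "umon n (transpose_mat ` U)"
  unfolding umon_def
proof (intro conjI ballI)
  have Uc: "U \<subseteq> carrier_mat n n" using U unfolding umon_def by simp
  show "transpose_mat ` U \<subseteq> carrier_mat n n" using Uc by auto
  show "1\<^sub>m n \<in> transpose_mat ` U" using U unfolding umon_def by (metis image_eqI transpose_one)
  fix a b assume "a \<in> transpose_mat ` U" "b \<in> transpose_mat ` U"
  then obtain a' b' where ab: "a' \<in> U" "b' \<in> U" "a = transpose_mat a'" "b = transpose_mat b'" by blast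
  have a'c: "a' \<in> carrier_mat n n" "b' \<in> carrier_mat n n" using ab Uc by auto
  have "a * b = transpose_mat (b' * a')" using ab transpose_mult[OF a'c(2) a'c(1)] by simp
  moreover have "b' * a' \<in> U" using U ab unfolding umon_def by simp
  ultimately show "a * b \<in> transpose_mat ` U" by simp
next
  have Uc: "U \<subseteq> carrier_mat n n" using U unfolding umon_def by simp
  fix a assume "a \<in> transpose_mat ` U"
  then obtain a' where a: "a' \<in> U" "a = transpose_mat a'" by blast
  obtain j where j: "(a' - 1\<^sub>m n) ^\<^sub>m j = 0\<^sub>m n n" using U a unfolding umon_def unipotent_mat_def by blast
  have a'c: "a' \<in> carrier_mat n n" using a Uc by auto
  have "transpose_mat a' - 1\<^sub>m n = transpose_mat (a' - 1\<^sub>m n)"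
    using transpose_minus[OF a'c one_carrier_mat] by simp
  then have "(a - 1\<^sub>m n) ^\<^sub>m j = transpose_mat ((a' - 1\<^sub>m n) ^\<^sub>m j)"
    using a transpose_pow[of "a' - 1\<^sub>m n" n j] a'c by simp
  also have "\<dots> = 0\<^sub>m n n" using j by simp
  finally show "unipotent_mat n a" unfolding unipotent_mat_def by blast
qed

lemma spn_one: "umon n U \<Longrightarrow> 1\<^sub>m n \<in> spn n U"
  unfolding umon_def by (auto intro: spn.sgen)

lemma fixed_vector:
  fixes U :: "'a::alg_closed_field mat set"
  assumes "umon n U" "0 < n"
  shows "\<exists>v\<in>carrier_vec n. v \<noteq> 0\<^sub>v n \<and> (\<forall>u\<in>U. u *\<^sub>v v = v)"
  using assms
proof (induction n arbitrary: U rule: less_induct)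
  case (less n)
  note U = less.prems(1) and n = less.prems(2)
  have Uc: "U \<subseteq> carrier_mat n n" using U unfolding umon_def by simp
  show ?case
  proof (cases "\<exists>v\<in>carrier_vec n. v \<noteq> 0\<^sub>v n \<and> (\<exists>w\<in>carrier_vec n. \<forall>a\<in>spn n U. a *\<^sub>v v \<noteq> w)")
    case True
    then obtain v w where v: "v \<in> carrier_vec n" "v \<noteq> 0\<^sub>v n" and w: "w \<in> carrier_vec n"
      and wn: "\<forall>a\<in>spn n U. a *\<^sub>v v \<noteq> w" by blast
    define W where "W = (\<lambda>a. a *\<^sub>v v) ` spn n U"
    have W: "subsp n W" unfolding subsp_def W_def
    proof (intro conjI ballI allI)
      show "(\<lambda>a. a *\<^sub>v v) ` spn n U \<subseteq> carrier_vec n"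
        using spn_carrier[OF Uc] v by (auto intro: mult_mat_vec_carrier)
      show "0\<^sub>v n \<in> (\<lambda>a. a *\<^sub>v v) ` spn n U"
        using v by (intro image_eqI[of _ _ "0\<^sub>m n n"]) (auto intro: spn.szero)
      fix x y assume "x \<in> (\<lambda>a. a *\<^sub>v v) ` spn n U" "y \<in> (\<lambda>a. a *\<^sub>v v) ` spn n U"
      then obtain a b where ab: "a \<in> spn n U" "b \<in> spn n U" "x = a *\<^sub>v v" "y = b *\<^sub>v v" by auto
      have "x + y = (a + b) *\<^sub>v v"
        using ab v spn_carrier[OF Uc] add_mult_distrib_mat_vec[of a n n b v] by simp
      then show "x + y \<in> (\<lambda>a. a *\<^sub>v v) ` spn n U" using ab by (auto intro: spn.sadd)
    next
      fix c x assume "x \<in> (\<lambda>a. a *\<^sub>v v) ` spn n U"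
      then obtain a where a: "a \<in> spn n U" "x = a *\<^sub>v v" by auto
      have "c \<cdot>\<^sub>v x = (c \<cdot>\<^sub>m a) *\<^sub>v v"
        using a v spn_carrier[OF Uc] smult_mat_mult_vec[of a n n v c] by simp
      then show "c \<cdot>\<^sub>v x \<in> (\<lambda>a. a *\<^sub>v v) ` spn n U" using a by (auto intro: spn.ssmult)
    qed
    have wW: "w \<notin> W" unfolding W_def using wn by auto
    obtain k and Xm :: "'a mat" where Xm: "k < n" "Xm \<in> carrier_mat n k" "inj_mat Xm" "\<forall>z\<in>carrier_vec k. Xm *\<^sub>v z \<in> W"
      "\<forall>w\<in>W. \<exists>z\<in>carrier_vec k. w = Xm *\<^sub>v z" using basis_proper[OF W w wW] by blast
    have vW: "v \<in> W" unfolding W_def using spn_one[OF U] v by (intro image_eqI[of _ _ "1\<^sub>m n"]) auto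
    have k0: "0 < k"
    proof (rule ccontr)
      assume "\<not> 0 < k"
      then have k: "k = 0" by simp
      obtain z where z: "z \<in> carrier_vec k" "v = Xm *\<^sub>v z" using Xm(5) vW by blast
      have "Xm *\<^sub>v z = 0\<^sub>v n" using z Xm(2) k by (intro eq_vecI) (auto simp: scalar_prod_def)
      then show False using z v by simp
    qed
    have inv: "\<forall>u\<in>U. \<forall>z\<in>carrier_vec k. \<exists>z'\<in>carrier_vec k. u *\<^sub>v (Xm *\<^sub>v z) = Xm *\<^sub>v z'"
    proof (intro ballI)
      fix u and z :: "'a vec" assume u: "u \<in> U" and z: "z \<in> carrier_vec k"
      have uc: "u \<in> carrier_mat n n" using u Uc by auto
      obtain a where a: "a \<in> spn n U" "Xm *\<^sub>v z = a *\<^sub>v v" using Xm(4) z unfolding W_def by blast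
      have ac: "a \<in> carrier_mat n n" using spn_carrier[OF Uc a(1)] .
      have "u *\<^sub>v (Xm *\<^sub>v z) = (u * a) *\<^sub>v v" using a(2) assoc_mult_mat_vec[OF uc ac v(1)] by simp
      moreover have "u * a \<in> spn n U" using spn_mult[OF U spn.sgen[OF u] a(1)] .
      ultimately have "u *\<^sub>v (Xm *\<^sub>v z) \<in> W" unfolding W_def by blast
      then show "\<exists>z'\<in>carrier_vec k. u *\<^sub>v (Xm *\<^sub>v z) = Xm *\<^sub>v z'" using Xm(5) by blast
    qed
    note R = restrict_rep[OF U Xm(2,3) inv]
    obtain z0 where z0: "z0 \<in> carrier_vec k" "z0 \<noteq> 0\<^sub>v k" "\<forall>M\<in>rrep Xm k ` U. M *\<^sub>v z0 = z0"
      using less.IH[OF Xm(1) R(2) k0] by blast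
    have "Xm *\<^sub>v z0 \<in> carrier_vec n" using Xm(2) z0 by simp
    moreover have "Xm *\<^sub>v z0 \<noteq> 0\<^sub>v n" using inj_matD[OF Xm(3,2) z0(1)] z0 by blast
    moreover have "\<forall>u\<in>U. u *\<^sub>v (Xm *\<^sub>v z0) = Xm *\<^sub>v z0"
    proof
      fix u assume u: "u \<in> U"
      have uc: "u \<in> carrier_mat n n" using u Uc by auto
      have Ru: "rrep Xm k u \<in> carrier_mat k k" "u * Xm = Xm * rrep Xm k u" using R(1) u by auto
      have "u *\<^sub>v (Xm *\<^sub>v z0) = (u * Xm) *\<^sub>v z0" using assoc_mult_mat_vec[OF uc Xm(2) z0(1)] by simp
      also have "\<dots> = Xm *\<^sub>v (rrep Xm k u *\<^sub>v z0)" using Ru assoc_mult_mat_vec[OF Xm(2) Ru(1) z0(1)] by simp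
      also have "rrep Xm k u *\<^sub>v z0 = z0" using z0(3) u by blast
      finally show "u *\<^sub>v (Xm *\<^sub>v z0) = Xm *\<^sub>v z0" .
    qed
    ultimately show ?thesis by blast
  next
    case False
    then have trans: "\<forall>v\<in>carrier_vec n. v \<noteq> 0\<^sub>v n \<longrightarrow> (\<forall>w\<in>carrier_vec n. \<exists>a\<in>spn n U. a *\<^sub>v v = w)"
      by blast
    have "\<forall>u\<in>U. u *\<^sub>v unit_vec n 0 = unit_vec n 0"
      using transitive_trivial[OF U n trans] by simp
    then show ?thesis using n by (intro bexI[of _ "unit_vec n 0"]) auto
  qed
qed

lemma mat_zero_by_vec:
  fixes A :: "'a::field mat"
  assumes A: "A \<in> carrier_mat n m" and z: "\<forall>x\<in>carrier_vec m. A *\<^sub>v x = 0\<^sub>v n"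
  shows "A = 0\<^sub>m n m"
proof (rule eq_matI)
  fix i j assume ij: "i < dim_row (0\<^sub>m n m :: 'a mat)" "j < dim_col (0\<^sub>m n m :: 'a mat)"
  then have "col A j = 0\<^sub>v n" using mult_unit_vec_col[OF A, of j] z unit_vec_carrier[of m j] by simp
  then have "col A j $ i = 0" using ij by simp
  then show "A $$ (i,j) = 0\<^sub>m n m $$ (i,j)" using A ij by simp
qed (use A in auto)

lemma nil_prod:
  fixes U :: "'a::alg_closed_field mat set"
  assumes "set us \<subseteq> U" "n \<le> length us" "umon n U"
  shows "mprod n (map (\<lambda>u. u - 1\<^sub>m n) us) = 0\<^sub>m n n"
  using assms
proof (induction n arbitrary: U us rule: less_induct)
  case (less n)
  note us = less.prems(1) and len = less.prems(2) and U = less.prems(3)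
  have Uc: "U \<subseteq> carrier_mat n n" using U unfolding umon_def by simp
  have Pc: "mprod n (map (\<lambda>u. u - 1\<^sub>m n) us) \<in> carrier_mat n n"
    using us Uc by (intro mprod_carrier) auto
  show ?case
  proof (cases "n = 0")
    case True
    then show ?thesis using Pc by (intro eq_matI) auto
  next
    case False
    then have n: "0 < n" by simp
    obtain phi where phi: "phi \<in> carrier_vec n" "phi \<noteq> 0\<^sub>v n" "\<forall>a\<in>transpose_mat ` U. a *\<^sub>v phi = phi"
      using fixed_vector[OF umon_transpose[OF U] n] by blast
    have phiu: "phi \<bullet> (u *\<^sub>v x) = phi \<bullet> x" if u: "u \<in> U" and x: "x \<in> carrier_vec n" for u x
    proof -
      have uc: "u \<in> carrier_mat n n" using u Uc by auto
      have "phi \<bullet> (u *\<^sub>v x) = (transpose_mat u *\<^sub>v phi) \<bullet> x"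
        using transpose_vec_mult_scalar[OF uc x phi(1)] by simp
      also have "transpose_mat u *\<^sub>v phi = phi" using phi(3) u by blast
      finally show ?thesis .
    qed
    define W where "W = {x \<in> carrier_vec n. phi \<bullet> x = 0}"
    have W: "subsp n W" unfolding subsp_def W_def
    proof (intro conjI ballI allI)
      show "{x \<in> carrier_vec n. phi \<bullet> x = 0} \<subseteq> carrier_vec n" by auto
      show "0\<^sub>v n \<in> {x \<in> carrier_vec n. phi \<bullet> x = 0}" using phi by simp
      fix x y assume "x \<in> {x \<in> carrier_vec n. phi \<bullet> x = 0}" "y \<in> {x \<in> carrier_vec n. phi \<bullet> x = 0}"
      then show "x + y \<in> {x \<in> carrier_vec n. phi \<bullet> x = 0}"
        using phi scalar_prod_add_distrib[of phi n x y] by simp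
    next
      fix c x assume "x \<in> {x \<in> carrier_vec n. phi \<bullet> x = 0}"
      then show "c \<cdot>\<^sub>v x \<in> {x \<in> carrier_vec n. phi \<bullet> x = 0}"
        using phi scalar_prod_smult_distrib[of phi n x c] by simp
    qed
    obtain l where l: "l < n" "phi $ l \<noteq> 0"
    proof (rule ccontr)
      assume "\<not> thesis"
      then have "\<forall>l<n. phi $ l = 0" using that by blast
      then have "phi = 0\<^sub>v n" using phi(1) by (intro eq_vecI) auto
      then show False using phi(2) by simp
    qed
    have wW: "unit_vec n l \<notin> W" unfolding W_def using l phi by simp
    obtain k and Xm :: "'a mat" where Xm: "k < n" "Xm \<in> carrier_mat n k" "inj_mat Xm"
      "\<forall>z\<in>carrier_vec k. Xm *\<^sub>v z \<in> W" "\<forall>w\<in>W. \<exists>z\<in>carrier_vec k. w = Xm *\<^sub>v z"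
      using basis_proper[OF W unit_vec_carrier wW] by blast
    have inv: "\<forall>u\<in>U. \<forall>z\<in>carrier_vec k. \<exists>z'\<in>carrier_vec k. u *\<^sub>v (Xm *\<^sub>v z) = Xm *\<^sub>v z'"
    proof (intro ballI)
      fix u and z :: "'a vec" assume u: "u \<in> U" and z: "z \<in> carrier_vec k"
      have uc: "u \<in> carrier_mat n n" using u Uc by auto
      have "Xm *\<^sub>v z \<in> W" using Xm(4) z by blast
      then have "u *\<^sub>v (Xm *\<^sub>v z) \<in> W" unfolding W_def using phiu[OF u] uc by auto
      then show "\<exists>z'\<in>carrier_vec k. u *\<^sub>v (Xm *\<^sub>v z) = Xm *\<^sub>v z'" using Xm(5) by blast
    qed
    note R = restrict_rep[OF U Xm(2,3) inv]
    have step: "(u - 1\<^sub>m n) * Xm = Xm * (rrep Xm k u - 1\<^sub>m k)" if u: "u \<in> U" for u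
    proof -
      have uc: "u \<in> carrier_mat n n" using u Uc by auto
      have Ru: "rrep Xm k u \<in> carrier_mat k k" "u * Xm = Xm * rrep Xm k u" using R(1) u by auto
      have "(u - 1\<^sub>m n) * Xm = u * Xm - 1\<^sub>m n * Xm" using minus_mult_distrib_mat[OF uc one_carrier_mat Xm(2)] .
      also have "\<dots> = Xm * rrep Xm k u - Xm * 1\<^sub>m k" using Ru Xm(2) by simp
      also have "\<dots> = Xm * (rrep Xm k u - 1\<^sub>m k)" using mult_minus_distrib_mat[OF Xm(2) Ru(1) one_carrier_mat] by simp
      finally show ?thesis .
    qed
    have inter: "mprod n (map (\<lambda>u. u - 1\<^sub>m n) vs) * Xm = Xm * mprod k (map (\<lambda>u. rrep Xm k u - 1\<^sub>m k) vs)"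
      if vs: "set vs \<subseteq> U" for vs
      using vs
    proof (induction vs)
      case Nil
      then show ?case using Xm(2) by simp
    next
      case (Cons u vs)
      have u: "u \<in> U" and vsU: "set vs \<subseteq> U" using Cons.prems by auto
      have uc: "u \<in> carrier_mat n n" using u Uc by auto
      have Ru: "rrep Xm k u \<in> carrier_mat k k" using R(1) u by auto
      have P: "mprod n (map (\<lambda>u. u - 1\<^sub>m n) vs) \<in> carrier_mat n n"
        using vsU Uc by (intro mprod_carrier) auto
      have Q: "mprod k (map (\<lambda>u. rrep Xm k u - 1\<^sub>m k) vs) \<in> carrier_mat k k"
        using vsU R(1) by (intro mprod_carrier) auto
      have um: "u - 1\<^sub>m n \<in> carrier_mat n n" using uc by simp
      have Rm: "rrep Xm k u - 1\<^sub>m k \<in> carrier_mat k k" using Ru by simp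
      have "mprod n (map (\<lambda>u. u - 1\<^sub>m n) (u # vs)) * Xm
          = (u - 1\<^sub>m n) * mprod n (map (\<lambda>u. u - 1\<^sub>m n) vs) * Xm" by simp
      also have "\<dots> = (u - 1\<^sub>m n) * (mprod n (map (\<lambda>u. u - 1\<^sub>m n) vs) * Xm)"
        using assoc_mult_mat[OF um P Xm(2)] .
      also have "\<dots> = (u - 1\<^sub>m n) * (Xm * mprod k (map (\<lambda>u. rrep Xm k u - 1\<^sub>m k) vs))"
        using Cons.IH vsU by simp
      also have "\<dots> = ((u - 1\<^sub>m n) * Xm) * mprod k (map (\<lambda>u. rrep Xm k u - 1\<^sub>m k) vs)"
        using assoc_mult_mat[OF um Xm(2) Q] by simp
      also have "\<dots> = (Xm * (rrep Xm k u - 1\<^sub>m k)) * mprod k (map (\<lambda>u. rrep Xm k u - 1\<^sub>m k) vs)"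
        using step[OF u] by simp
      also have "\<dots> = Xm * mprod k (map (\<lambda>u. rrep Xm k u - 1\<^sub>m k) (u # vs))"
        using assoc_mult_mat[OF Xm(2) Rm Q] by simp
      finally show ?case .
    qed
    have "us \<noteq> []" using len n by auto
    then obtain us' ul where usd: "us = us' @ [ul]" by (metis rev_exhaust)
    have us'U: "set us' \<subseteq> U" and ulU: "ul \<in> U" using us usd by auto
    have ulc: "ul \<in> carrier_mat n n" using ulU Uc by auto
    have ulm: "ul - 1\<^sub>m n \<in> carrier_mat n n" using ulc by simp
    define P' where "P' = mprod n (map (\<lambda>u. u - 1\<^sub>m n) us')"
    have P'c: "P' \<in> carrier_mat n n" unfolding P'_def using us'U Uc by (intro mprod_carrier) auto
    have "mprod k (map (\<lambda>u. rrep Xm k u - 1\<^sub>m k) us') = mprod k (map (\<lambda>v. v - 1\<^sub>m k) (map (rrep Xm k) us'))"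
      by (simp add: comp_def)
    also have "\<dots> = 0\<^sub>m k k"
    proof (rule less.IH[OF Xm(1)])
      show "set (map (rrep Xm k) us') \<subseteq> rrep Xm k ` U" using us'U by auto
      show "k \<le> length (map (rrep Xm k) us')" using len usd Xm(1) by simp
      show "umon k (rrep Xm k ` U)" using R(2) .
    qed
    finally have "P' * Xm = 0\<^sub>m n k" using inter[OF us'U] Xm(2) unfolding P'_def by simp
    then have P'X: "P' *\<^sub>v (Xm *\<^sub>v z) = 0\<^sub>v n" if z: "z \<in> carrier_vec k" for z
      using assoc_mult_mat_vec[OF P'c Xm(2) z] z by simp
    have "P' * (ul - 1\<^sub>m n) = 0\<^sub>m n n"
    proof (rule mat_zero_by_vec)
      show "P' * (ul - 1\<^sub>m n) \<in> carrier_mat n n" using P'c ulm by simp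
      show "\<forall>x\<in>carrier_vec n. P' * (ul - 1\<^sub>m n) *\<^sub>v x = 0\<^sub>v n"
      proof
        fix x :: "'a vec" assume x: "x \<in> carrier_vec n"
        have y: "(ul - 1\<^sub>m n) *\<^sub>v x \<in> carrier_vec n" using mult_mat_vec_carrier[OF ulm x] .
        have "(ul - 1\<^sub>m n) *\<^sub>v x = ul *\<^sub>v x - x" using minus_mult_distrib_mat_vec[OF ulc one_carrier_mat x] x by simp
        then have "phi \<bullet> ((ul - 1\<^sub>m n) *\<^sub>v x) = phi \<bullet> (ul *\<^sub>v x) - phi \<bullet> x"
          using scalar_prod_minus_distrib[OF phi(1) _ x, of "ul *\<^sub>v x"] ulc x by simp
        also have "\<dots> = 0" using phiu[OF ulU x] by simp
        finally have "(ul - 1\<^sub>m n) *\<^sub>v x \<in> W" unfolding W_def using y by simp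
        then obtain z where z: "z \<in> carrier_vec k" "(ul - 1\<^sub>m n) *\<^sub>v x = Xm *\<^sub>v z" using Xm(5) by blast
        have "P' * (ul - 1\<^sub>m n) *\<^sub>v x = P' *\<^sub>v ((ul - 1\<^sub>m n) *\<^sub>v x)"
          using assoc_mult_mat_vec[OF P'c ulm x] .
        also have "\<dots> = 0\<^sub>v n" using z P'X by simp
        finally show "P' * (ul - 1\<^sub>m n) *\<^sub>v x = 0\<^sub>v n" .
      qed
    qed
    moreover have "mprod n (map (\<lambda>u. u - 1\<^sub>m n) us) = P' * (ul - 1\<^sub>m n)"
    proof -
      have "(\<lambda>u. u - 1\<^sub>m n) ` set us' \<subseteq> carrier_mat n n"
      proof
        fix y assume "y \<in> (\<lambda>u. u - 1\<^sub>m n) ` set us'"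
        then obtain u where "u \<in> set us'" "y = u - 1\<^sub>m n" by blast
        then show "y \<in> carrier_mat n n" using us'U Uc by auto
      qed
      then show ?thesis
        unfolding usd P'_def using mprod_snoc[of "map (\<lambda>u. u - 1\<^sub>m n) us'" n "ul - 1\<^sub>m n"] ulm by simp
    qed
    ultimately show ?thesis by simp
  qed
qed

abbreviation acm :: "'a::field mat \<Rightarrow> 'a alg_closure mat" where
  "acm A \<equiv> map_mat to_ac A"

lemma acm_mult:
  fixes A :: "'a::field mat"
  assumes "A \<in> carrier_mat n m" "B \<in> carrier_mat m p"
  shows "acm (A * B) = acm A * acm B"
  using assms by (intro eq_matI) (auto simp: scalar_prod_def to_ac_sum)

lemma acm_minus:
  fixes A :: "'a::field mat"
  assumes "A \<in> carrier_mat n m" "B \<in> carrier_mat n m"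
  shows "acm (A - B) = acm A - acm B"
  using assms by (intro eq_matI) auto

lemma acm_one[simp]: "acm (1\<^sub>m n :: 'a::field mat) = 1\<^sub>m n"
  by (intro eq_matI) auto

lemma acm_zero[simp]: "acm (0\<^sub>m n m :: 'a::field mat) = 0\<^sub>m n m"
  by (intro eq_matI) auto

lemma acm_pow:
  fixes A :: "'a::field mat"
  assumes A: "A \<in> carrier_mat n n"
  shows "acm (A ^\<^sub>m j) = acm A ^\<^sub>m j"
proof (induction j)
  case 0
  then show ?case using A acm_one[of n] by simp
next
  case (Suc j)
  then show ?case using acm_mult[of "A ^\<^sub>m j" n n A n] A by simp
qed

lemma acm_mprod:
  fixes As :: "'a::field mat list"
  assumes "set As \<subseteq> carrier_mat n n"
  shows "acm (mprod n As) = mprod n (map acm As)"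
  using assms
proof (induction As)
  case Nil
  then show ?case using acm_one by simp
next
  case (Cons A As)
  then show ?case using acm_mult[of A n n "mprod n As" n] mprod_carrier[of As n] by simp
qed

lemma nil_prod_field:
  fixes U :: "'a::field mat set"
  assumes us: "set us \<subseteq> U" and len: "n \<le> length us" and U: "umon n U"
  shows "mprod n (map (\<lambda>u. u - 1\<^sub>m n) us) = 0\<^sub>m n n"
proof -
  have Uc: "U \<subseteq> carrier_mat n n" using U unfolding umon_def by simp
  have U': "umon n (acm ` U)" unfolding umon_def
  proof (intro conjI ballI)
    show "acm ` U \<subseteq> carrier_mat n n" using Uc by auto
    show "1\<^sub>m n \<in> acm ` U" using U acm_one[of n] unfolding umon_def by (metis image_eqI)
    fix a b assume "a \<in> acm ` U" "b \<in> acm ` U"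
    then obtain a' b' where ab: "a' \<in> U" "b' \<in> U" "a = acm a'" "b = acm b'" by blast
    have a'c: "a' \<in> carrier_mat n n" "b' \<in> carrier_mat n n" using ab Uc by auto
    have "a * b = acm (a' * b')" using ab acm_mult[OF a'c] by simp
    moreover have "a' * b' \<in> U" using U ab unfolding umon_def by simp
    ultimately show "a * b \<in> acm ` U" by simp
  next
    fix a assume "a \<in> acm ` U"
    then obtain a' where a: "a' \<in> U" "a = acm a'" by blast
    have a'c: "a' \<in> carrier_mat n n" using a Uc by auto
    obtain j where j: "(a' - 1\<^sub>m n) ^\<^sub>m j = 0\<^sub>m n n" using U a unfolding umon_def unipotent_mat_def by blast
    have e: "a - 1\<^sub>m n = acm (a' - 1\<^sub>m n)"
      using a acm_minus[OF a'c one_carrier_mat] by simp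
    have "(a - 1\<^sub>m n) ^\<^sub>m j = acm ((a' - 1\<^sub>m n) ^\<^sub>m j)"
      unfolding e using acm_pow[of "a' - 1\<^sub>m n" n j] a'c by simp
    also have "\<dots> = 0\<^sub>m n n" using j acm_zero by simp
    finally show "unipotent_mat n a" unfolding unipotent_mat_def by blast
  qed
  have cs: "set (map (\<lambda>u. u - 1\<^sub>m n) us) \<subseteq> carrier_mat n n" using us Uc by auto
  have meq: "map acm (map (\<lambda>u. u - 1\<^sub>m n) us) = map (\<lambda>u. u - 1\<^sub>m n) (map acm us)"
  proof (unfold map_map, intro map_cong refl)
    fix x assume "x \<in> set us"
    then have xc: "x \<in> carrier_mat n n" using us Uc by auto
    show "(acm \<circ> (\<lambda>u. u - 1\<^sub>m n)) x = ((\<lambda>u. u - 1\<^sub>m n) \<circ> acm) x"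
      using acm_minus[OF xc one_carrier_mat] by simp
  qed
  have "acm (mprod n (map (\<lambda>u. u - 1\<^sub>m n) us)) = mprod n (map acm (map (\<lambda>u. u - 1\<^sub>m n) us))"
    using acm_mprod[OF cs] .
  also have "\<dots> = mprod n (map (\<lambda>u. u - 1\<^sub>m n) (map acm us))"
    using meq by (rule arg_cong)
  also have "\<dots> = 0\<^sub>m n n" using nil_prod[of "map acm us" "acm ` U" n] us len U' by auto
  finally have z: "acm (mprod n (map (\<lambda>u. u - 1\<^sub>m n) us)) = 0\<^sub>m n n" .
  have Pc: "mprod n (map (\<lambda>u. u - 1\<^sub>m n) us) \<in> carrier_mat n n" using mprod_carrier[OF cs] .
  show ?thesis
  proof (rule eq_matI)
    fix i j assume ij: "i < dim_row (0\<^sub>m n n :: 'a mat)" "j < dim_col (0\<^sub>m n n :: 'a mat)"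
    have "to_ac (mprod n (map (\<lambda>u. u - 1\<^sub>m n) us) $$ (i,j)) = 0"
      using arg_cong[OF z, of "\<lambda>M. M $$ (i,j)"] ij Pc by simp
    then show "mprod n (map (\<lambda>u. u - 1\<^sub>m n) us) $$ (i,j) = 0\<^sub>m n n $$ (i,j)" using ij by simp
  qed (use Pc in auto)
qed

lemma env_carrier:
  assumes "H \<subseteq> carrier_mat n n" "a \<in> env_alg n H"
  shows "a \<in> carrier_mat n n"
  using assms(2) by (induction rule: env_alg.induct) (use assms(1) in auto)

lemma env_minus:
  assumes "H \<subseteq> carrier_mat n n" "a \<in> env_alg n H" "b \<in> env_alg n H"
  shows "a - b \<in> env_alg n H"
  using minus_as_smult[OF env_carrier[OF assms(1,2)] env_carrier[OF assms(1,3)]] assms(2,3)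
  by (metis env_alg.add env_alg.smult)

fun gs :: "nat \<Rightarrow> 'a::field mat \<Rightarrow> nat \<Rightarrow> 'a mat" where
  "gs n z 0 = 0\<^sub>m n n"
| "gs n z (Suc k) = 1\<^sub>m n + z * gs n z k"

lemma gs_carrier: "z \<in> carrier_mat n n \<Longrightarrow> gs n z k \<in> carrier_mat n n"
  by (induction k) auto

lemma gs_env: "z \<in> env_alg n H \<Longrightarrow> gs n z k \<in> env_alg n H"
  by (induction k) (auto intro: env_alg.intros)

lemma gs_geom:
  fixes z :: "'a::field mat"
  assumes z: "z \<in> carrier_mat n n"
  shows "gs n z k * (1\<^sub>m n - z) = 1\<^sub>m n - z ^\<^sub>m k"
proof (induction k)
  case 0
  show ?case using z by (intro eq_matI) auto
next
  case (Suc k)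
  have G: "gs n z k \<in> carrier_mat n n" using gs_carrier[OF z] .
  have oz: "1\<^sub>m n - z \<in> carrier_mat n n" using z by simp
  have zk: "z ^\<^sub>m k \<in> carrier_mat n n" using z by simp
  have "gs n z (Suc k) * (1\<^sub>m n - z) = 1\<^sub>m n * (1\<^sub>m n - z) + (z * gs n z k) * (1\<^sub>m n - z)"
    using add_mult_distrib_mat[OF one_carrier_mat mult_carrier_mat[OF z G] oz] by simp
  also have "(z * gs n z k) * (1\<^sub>m n - z) = z * (gs n z k * (1\<^sub>m n - z))"
    using assoc_mult_mat[OF z G oz] .
  also have "\<dots> = z * (1\<^sub>m n - z ^\<^sub>m k)" using Suc by simp
  also have "\<dots> = z * 1\<^sub>m n - z * z ^\<^sub>m k" using mult_minus_distrib_mat[OF z one_carrier_mat zk] .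
  also have "z * z ^\<^sub>m k = z ^\<^sub>m Suc k" using pow_commute[OF z, of k] by simp
  finally have e: "gs n z (Suc k) * (1\<^sub>m n - z) = 1\<^sub>m n * (1\<^sub>m n - z) + (z * 1\<^sub>m n - z ^\<^sub>m Suc k)" .
  show ?case unfolding e using z by (intro eq_matI) auto
qed

lemma add4_mat:
  fixes l1 :: "'a::field mat"
  shows "l1 \<in> carrier_mat n m \<Longrightarrow> p1 \<in> carrier_mat n m \<Longrightarrow> l2 \<in> carrier_mat n m \<Longrightarrow> p2 \<in> carrier_mat n m
    \<Longrightarrow> (l1 + p1) + (l2 + p2) = (l1 + l2) + (p1 + p2)"
  by (intro eq_matI) auto

lemma neg2_mat:
  fixes l :: "'a::field mat"
  shows "l \<in> carrier_mat n m \<Longrightarrow> p \<in> carrier_mat n m \<Longrightarrow> - (l + p) = - l + (- 1) \<cdot>\<^sub>m p"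
  by (intro eq_matI) auto

lemma sub_from_mat:
  fixes l :: "'a::field mat"
  assumes "l \<in> carrier_mat n m" "z \<in> carrier_mat n m" "e = l + z"
  shows "l = e - z"
  using assms by (intro eq_matI) auto

theorem lemma3p1:
  fixes H :: "'a::field mat set" and n :: nat
  assumes "GL_subgroup n H"
    and "unipotent_by_abelian n H"
    and "g \<in> H" and "h \<in> H"
  shows "g * h - h * g \<in> jacobson_rad n (env_alg n H)"
proof -
  note GL = assms(1)
  have Hc: "H \<subseteq> carrier_mat n n" using GL unfolding GL_subgroup_def by simp
  obtain U where Un: "normal_subgroup_of n U H" and Uu: "\<forall>u\<in>U. unipotent_mat n u"
    and Uco: "\<forall>g\<in>H. \<forall>h\<in>H. (\<lambda>u. g * h * u) ` U = (\<lambda>u. h * g * u) ` U"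
    using assms(2) unfolding unipotent_by_abelian_def by blast
  have UH: "U \<subseteq> H" and GLU: "GL_subgroup n U" using Un unfolding normal_subgroup_of_def subgroup_of_def by auto
  have Unorm: "\<forall>k\<in>H. (\<lambda>u. k * u) ` U = (\<lambda>u. u * k) ` U" using Un unfolding normal_subgroup_of_def by simp
  have Uc: "U \<subseteq> carrier_mat n n" using UH Hc by auto
  have U: "umon n U" unfolding umon_def using GLU Uu Uc unfolding GL_subgroup_def by auto
  define A where "A = env_alg n H"
  have Ac: "\<And>a. a \<in> A \<Longrightarrow> a \<in> carrier_mat n n" unfolding A_def using env_carrier[OF Hc] by blast
  have gc: "g \<in> carrier_mat n n" "h \<in> carrier_mat n n" using assms Hc by auto
  obtain u where u: "u \<in> U" "g * h = h * g * u"
  proof -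
    have "1\<^sub>m n \<in> U" using U unfolding umon_def by simp
    then have "g * h * 1\<^sub>m n \<in> (\<lambda>u. h * g * u) ` U" using Uco assms(3,4) by blast
    then obtain u where "u \<in> U" "g * h * 1\<^sub>m n = h * g * u" by blast
    moreover have "g * h * 1\<^sub>m n = g * h" using gc by simp
    ultimately show ?thesis using that by simp
  qed
  have uc: "u \<in> carrier_mat n n" using u Uc by auto
  have conj: "\<exists>k'\<in>H. k * k' = 1\<^sub>m n \<and> k' * k = 1\<^sub>m n \<and> (\<forall>v\<in>U. k' * v * k \<in> U)" if k: "k \<in> H" for k
  proof -
    obtain k' where k': "k' \<in> H" "k * k' = 1\<^sub>m n" "k' * k = 1\<^sub>m n" using GL k unfolding GL_subgroup_def by blast
    have "k' * v * k \<in> U" if v: "v \<in> U" for v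
    proof -
      have "k' * v \<in> (\<lambda>u. u * k') ` U" using Unorm k'(1) v by blast
      then obtain v' where v': "v' \<in> U" "k' * v = v' * k'" by blast
      have "k' * v * k = v' * k' * k" using v' by simp
      also have "\<dots> = v' * (k' * k)" using v' k' k Uc Hc by (meson assoc_mult_mat subsetD)
      also have "\<dots> = v'" using k'(3) v' Uc by auto
      finally show ?thesis using v' by simp
    qed
    then show ?thesis using k' by blast
  qed
  define P :: "'a mat list \<Rightarrow> 'a mat" where "P = (\<lambda>us. mprod n (map (\<lambda>v. v - 1\<^sub>m n) us))"
  have Pc: "P us \<in> carrier_mat n n" if "set us \<subseteq> U" for us
    unfolding P_def using that Uc by (intro mprod_carrier) auto
  define K :: "nat \<Rightarrow> 'a vec set" where "K = (\<lambda>j. {x \<in> carrier_vec n. \<forall>us. set us \<subseteq> U \<longrightarrow> length us = j \<longrightarrow> P us *\<^sub>v x = 0\<^sub>v n})"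
  have Kc: "x \<in> carrier_vec n" if "x \<in> K j" for x j using that unfolding K_def by auto
  have Kz: "0\<^sub>v n \<in> K j" for j unfolding K_def using Pc by auto
  have Kadd: "x + y \<in> K j" if xy: "x \<in> K j" "y \<in> K j" for x y j
  proof -
    have xc: "x \<in> carrier_vec n" "y \<in> carrier_vec n" using xy unfolding K_def by auto
    have "P us *\<^sub>v (x + y) = 0\<^sub>v n" if us: "set us \<subseteq> U" "length us = j" for us
    proof -
      have "P us *\<^sub>v (x + y) = P us *\<^sub>v x + P us *\<^sub>v y"
        using mult_add_distrib_mat_vec[OF Pc[OF us(1)] xc] .
      also have "\<dots> = 0\<^sub>v n + 0\<^sub>v n" using xy us unfolding K_def by auto
      finally show ?thesis by simp
    qed
    then show ?thesis unfolding K_def using xc by auto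
  qed
  have Ksm: "c \<cdot>\<^sub>v x \<in> K j" if x: "x \<in> K j" for x j c
  proof -
    have xc: "x \<in> carrier_vec n" using x unfolding K_def by auto
    have "P us *\<^sub>v (c \<cdot>\<^sub>v x) = 0\<^sub>v n" if us: "set us \<subseteq> U" "length us = j" for us
    proof -
      have "P us *\<^sub>v (c \<cdot>\<^sub>v x) = c \<cdot>\<^sub>v (P us *\<^sub>v x)"
        using mult_mat_vec[OF Pc[OF us(1)] xc] .
      also have "\<dots> = c \<cdot>\<^sub>v 0\<^sub>v n" using x us unfolding K_def by auto
      also have "\<dots> = 0\<^sub>v n" by (intro eq_vecI) auto
      finally show ?thesis .
    qed
    then show ?thesis unfolding K_def using xc by auto
  qed
  have Kn: "x \<in> K n" if x: "x \<in> carrier_vec n" for x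
    unfolding K_def P_def using x nil_prod_field[OF _ _ U] by auto
  have K0: "x = 0\<^sub>v n" if x: "x \<in> K 0" for x
  proof -
    have "P [] *\<^sub>v x = 0\<^sub>v n" using x unfolding K_def by auto
    then show ?thesis using Kc[OF x] unfolding P_def by simp
  qed
  have Kstep: "(v - 1\<^sub>m n) *\<^sub>v x \<in> K j" if v: "v \<in> U" and x: "x \<in> K (Suc j)" for v x j
  proof -
    have xc: "x \<in> carrier_vec n" using Kc[OF x] .
    have vc: "v - 1\<^sub>m n \<in> carrier_mat n n" using v Uc by auto
    have "P us *\<^sub>v ((v - 1\<^sub>m n) *\<^sub>v x) = 0\<^sub>v n" if us: "set us \<subseteq> U" "length us = j" for us
    proof -
      have cs: "set (map (\<lambda>v. v - 1\<^sub>m n) us) \<subseteq> carrier_mat n n" using us Uc by auto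
      have "P us *\<^sub>v ((v - 1\<^sub>m n) *\<^sub>v x) = (P us * (v - 1\<^sub>m n)) *\<^sub>v x"
        using assoc_mult_mat_vec[OF Pc[OF us(1)] vc xc] by simp
      also have "P us * (v - 1\<^sub>m n) = P (us @ [v])"
        unfolding P_def using mprod_snoc[OF cs vc] by simp
      also have "P (us @ [v]) *\<^sub>v x = 0\<^sub>v n" using x us v unfolding K_def by auto
      finally show ?thesis .
    qed
    then show ?thesis unfolding K_def using mult_mat_vec_carrier[OF vc xc] by auto
  qed
  have Kconj: "k *\<^sub>v x \<in> K j" if k: "k \<in> H" and x: "x \<in> K j" for k x j
  proof -
    obtain k' where k': "k' \<in> H" "k * k' = 1\<^sub>m n" "k' * k = 1\<^sub>m n" "\<forall>v\<in>U. k' * v * k \<in> U"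
      using conj[OF k] by blast
    have kc: "k \<in> carrier_mat n n" "k' \<in> carrier_mat n n" using k k'(1) Hc by auto
    have xc: "x \<in> carrier_vec n" using Kc[OF x] .
    have one_step: "(v - 1\<^sub>m n) * k = k * (k' * v * k - 1\<^sub>m n)" if v: "v \<in> U" for v
    proof -
      have vc: "v \<in> carrier_mat n n" using v Uc by auto
      have "k * (k' * v * k - 1\<^sub>m n) = k * (k' * v * k) - k * 1\<^sub>m n"
        using mult_minus_distrib_mat[OF kc(1) _ one_carrier_mat, of "k' * v * k"] kc vc by simp
      also have "k * (k' * v * k) = (k * k') * v * k"
        using carrier_matD[OF kc(1)] carrier_matD[OF kc(2)] carrier_matD[OF vc] by (simp add: assoc_mm)
      also have "\<dots> = v * k" using k'(2) vc by simp
      finally have "k * (k' * v * k - 1\<^sub>m n) = v * k - k" using kc by simp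
      also have "\<dots> = (v - 1\<^sub>m n) * k" using minus_mult_distrib_mat[OF vc one_carrier_mat kc(1)] kc by simp
      finally show ?thesis by simp
    qed
    have comm: "P us * k = k * P (map (\<lambda>v. k' * v * k) us)" if "set us \<subseteq> U" for us
      using that
    proof (induction us)
      case Nil
      then show ?case unfolding P_def using kc by simp
    next
      case (Cons v us)
      have v: "v \<in> U" and usU: "set us \<subseteq> U" using Cons.prems by auto
      have vc: "v - 1\<^sub>m n \<in> carrier_mat n n" using v Uc by auto
      have us'U: "set (map (\<lambda>v. k' * v * k) us) \<subseteq> U" using usU k'(4) by auto
      have v'c: "k' * v * k - 1\<^sub>m n \<in> carrier_mat n n" using k'(4) v Uc by auto
      have "P (v # us) * k = (v - 1\<^sub>m n) * P us * k" unfolding P_def by simp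
      also have "\<dots> = (v - 1\<^sub>m n) * (P us * k)" using assoc_mult_mat[OF vc Pc[OF usU] kc(1)] .
      also have "\<dots> = (v - 1\<^sub>m n) * (k * P (map (\<lambda>v. k' * v * k) us))" using Cons.IH usU by simp
      also have "\<dots> = ((v - 1\<^sub>m n) * k) * P (map (\<lambda>v. k' * v * k) us)"
        using assoc_mult_mat[OF vc kc(1) Pc[OF us'U]] by simp
      also have "\<dots> = (k * (k' * v * k - 1\<^sub>m n)) * P (map (\<lambda>v. k' * v * k) us)" using one_step[OF v] by simp
      also have "\<dots> = k * ((k' * v * k - 1\<^sub>m n) * P (map (\<lambda>v. k' * v * k) us))"
        using assoc_mult_mat[OF kc(1) v'c Pc[OF us'U]] .
      also have "(k' * v * k - 1\<^sub>m n) * P (map (\<lambda>v. k' * v * k) us) = P (map (\<lambda>v. k' * v * k) (v # us))"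
        unfolding P_def by simp
      finally show ?case .
    qed
    have "P us *\<^sub>v (k *\<^sub>v x) = 0\<^sub>v n" if us: "set us \<subseteq> U" "length us = j" for us
    proof -
      have us'U: "set (map (\<lambda>v. k' * v * k) us) \<subseteq> U" using us k'(4) by auto
      have "P us *\<^sub>v (k *\<^sub>v x) = (P us * k) *\<^sub>v x" using assoc_mult_mat_vec[OF Pc[OF us(1)] kc(1) xc] by simp
      also have "\<dots> = (k * P (map (\<lambda>v. k' * v * k) us)) *\<^sub>v x" using comm[OF us(1)] by simp
      also have "\<dots> = k *\<^sub>v (P (map (\<lambda>v. k' * v * k) us) *\<^sub>v x)"
        using assoc_mult_mat_vec[OF kc(1) Pc[OF us'U] xc] .
      also have "P (map (\<lambda>v. k' * v * k) us) *\<^sub>v x = 0\<^sub>v n" using x us'U us(2) unfolding K_def by auto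
      finally show ?thesis using kc by simp
    qed
    then show ?thesis unfolding K_def using mult_mat_vec_carrier[OF kc(1) xc] by auto
  qed
  have Kalg: "a *\<^sub>v x \<in> K j" if a: "a \<in> A" and x: "x \<in> K j" for a x j
    using a[unfolded A_def] x
  proof (induction arbitrary: x rule: env_alg.induct)
    case (gen k)
    then show ?case using Kconj by blast
  next
    case zero
    then show ?case using Kz Kc by simp
  next
    case one
    then show ?case using Kc by simp
  next
    case (add a b)
    have "(a + b) *\<^sub>v x = a *\<^sub>v x + b *\<^sub>v x"
      using add_mult_distrib_mat_vec[OF env_carrier[OF Hc add.hyps(1)] env_carrier[OF Hc add.hyps(2)] Kc[OF add.prems]] .
    then show ?case using Kadd add by simp
  next
    case (smult a c)
    have "(c \<cdot>\<^sub>m a) *\<^sub>v x = c \<cdot>\<^sub>v (a *\<^sub>v x)"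
      using smult_mat_mult_vec[OF env_carrier[OF Hc smult.hyps(1)] Kc[OF smult.prems]] .
    then show ?case using Ksm smult by simp
  next
    case (mult a b)
    have "(a * b) *\<^sub>v x = a *\<^sub>v (b *\<^sub>v x)"
      using assoc_mult_mat_vec[OF env_carrier[OF Hc mult.hyps(1)] env_carrier[OF Hc mult.hyps(2)] Kc[OF mult.prems]] .
    then show ?case using mult by simp
  qed
  have nilp: "(a * (v - 1\<^sub>m n)) ^\<^sub>m n = 0\<^sub>m n n" if a: "a \<in> A" and v: "v \<in> U" for a v
  proof -
    define z where "z = a * (v - 1\<^sub>m n)"
    have vc: "v - 1\<^sub>m n \<in> carrier_mat n n" using v Uc by auto
    have zc: "z \<in> carrier_mat n n" unfolding z_def using Ac[OF a] vc by simp
    have zstep: "z *\<^sub>v x \<in> K j" if "x \<in> K (Suc j)" for x j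
    proof -
      have "z *\<^sub>v x = a *\<^sub>v ((v - 1\<^sub>m n) *\<^sub>v x)" unfolding z_def
        using assoc_mult_mat_vec[OF Ac[OF a] vc Kc[OF that]] .
      then show ?thesis using Kalg[OF a Kstep[OF v that]] by simp
    qed
    have zpow: "\<forall>m x. x \<in> K (i + m) \<longrightarrow> z ^\<^sub>m i *\<^sub>v x \<in> K m" for i
    proof (induction i)
      case 0
      show ?case
      proof (intro allI impI)
        fix m x assume x: "x \<in> K (0 + m)"
        have "z ^\<^sub>m 0 *\<^sub>v x = x" using zc Kc[of x m] x by simp
        then show "z ^\<^sub>m 0 *\<^sub>v x \<in> K m" using x by simp
      qed
    next
      case (Suc i)
      show ?case
      proof (intro allI impI)
        fix m x assume x: "x \<in> K (Suc i + m)"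
        have "z *\<^sub>v x \<in> K (i + m)" using zstep[of x "i + m"] x by simp
        then have "z ^\<^sub>m i *\<^sub>v (z *\<^sub>v x) \<in> K m" using Suc by blast
        moreover have "z ^\<^sub>m Suc i *\<^sub>v x = z ^\<^sub>m i *\<^sub>v (z *\<^sub>v x)"
          using assoc_mult_mat_vec[OF pow_carrier_mat[OF zc, of i] zc Kc[OF x]] by simp
        ultimately show "z ^\<^sub>m Suc i *\<^sub>v x \<in> K m" by simp
      qed
    qed
    have "z ^\<^sub>m n = 0\<^sub>m n n"
    proof (rule mat_zero_by_vec)
      show "z ^\<^sub>m n \<in> carrier_mat n n" using zc by simp
      show "\<forall>x\<in>carrier_vec n. z ^\<^sub>m n *\<^sub>v x = 0\<^sub>v n"
        using zpow[of n] Kn K0 by fastforce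
    qed
    then show ?thesis unfolding z_def .
  qed
  have oneA: "1\<^sub>m n \<in> A" unfolding A_def by (rule env_alg.one)
  have zeroA: "0\<^sub>m n n \<in> A" unfolding A_def by (rule env_alg.zero)
  have multA: "a * b \<in> A" if "a \<in> A" "b \<in> A" for a b using that unfolding A_def by (rule env_alg.mult)
  have addA: "a + b \<in> A" if "a \<in> A" "b \<in> A" for a b using that unfolding A_def by (rule env_alg.add)
  have smultA: "c \<cdot>\<^sub>m a \<in> A" if "a \<in> A" for a c using that unfolding A_def by (rule env_alg.smult)
  have HA: "k \<in> A" if "k \<in> H" for k using that unfolding A_def by (rule env_alg.gen)
  define x0 where "x0 = g * h - h * g"
  have hgc: "h * g \<in> carrier_mat n n" using gc by simp
  have x0eq: "x0 = (h * g) * (u - 1\<^sub>m n)"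
  proof -
    have "(h * g) * (u - 1\<^sub>m n) = h * g * u - h * g * 1\<^sub>m n"
      using mult_minus_distrib_mat[OF hgc uc one_carrier_mat] .
    also have "\<dots> = g * h - h * g" using u(2) right_mult_one_mat[OF hgc] by simp
    finally show ?thesis unfolding x0_def by simp
  qed
  have uA: "u \<in> A" using HA UH u(1) by auto
  have um1A: "u - 1\<^sub>m n \<in> A" using env_minus[OF Hc uA[unfolded A_def] oneA[unfolded A_def]] unfolding A_def .
  have hgA: "h * g \<in> A" using multA HA assms(3,4) by simp
  have x0A: "x0 \<in> A" unfolding x0eq using multA[OF hgA um1A] .
  have x0c: "x0 \<in> carrier_mat n n" using Ac[OF x0A] .
  have "x0 \<in> L" if L: "maximal_left_ideal n A L" for L
  proof (rule ccontr)
    assume nx: "x0 \<notin> L"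
    have LI: "left_ideal n A L" and LA: "L \<noteq> A"
      and Lmax: "\<forall>L'. left_ideal n A L' \<and> L \<subseteq> L' \<longrightarrow> L' = L \<or> L' = A"
      using L unfolding maximal_left_ideal_def by auto
    have LsA: "L \<subseteq> A" and L0: "0\<^sub>m n n \<in> L" and Ladd: "\<forall>x\<in>L. \<forall>y\<in>L. x + y \<in> L"
      and Lneg: "\<forall>x\<in>L. - x \<in> L" and Lmul: "\<forall>a\<in>A. \<forall>x\<in>L. a * x \<in> L"
      using LI unfolding left_ideal_def by auto
    define L' where "L' = {y. \<exists>l\<in>L. \<exists>a\<in>A. y = l + a * x0}"
    have LI': "left_ideal n A L'" unfolding left_ideal_def
    proof (intro conjI ballI)
      show "L' \<subseteq> A" unfolding L'_def using LsA multA addA x0A by blast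
      have "0\<^sub>m n n = 0\<^sub>m n n + 0\<^sub>m n n * x0" using x0c by simp
      then show "0\<^sub>m n n \<in> L'" unfolding L'_def using L0 zeroA by blast
    next
      fix x y assume "x \<in> L'" "y \<in> L'"
      then obtain l1 a1 l2 a2 where la: "l1 \<in> L" "a1 \<in> A" "x = l1 + a1 * x0" "l2 \<in> L" "a2 \<in> A" "y = l2 + a2 * x0"
        unfolding L'_def by blast
      have c: "l1 \<in> carrier_mat n n" "l2 \<in> carrier_mat n n" "a1 \<in> carrier_mat n n" "a2 \<in> carrier_mat n n"
        using la LsA Ac by auto
      have "x + y = (l1 + l2) + (a1 * x0 + a2 * x0)" unfolding la(3,6)
        by (rule add4_mat) (use c x0c in auto)
      also have "a1 * x0 + a2 * x0 = (a1 + a2) * x0" using add_mult_distrib_mat[OF c(3,4) x0c] by simp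
      finally show "x + y \<in> L'" unfolding L'_def using la Ladd addA by blast
    next
      fix x assume "x \<in> L'"
      then obtain l a where la: "l \<in> L" "a \<in> A" "x = l + a * x0" unfolding L'_def by blast
      have c: "l \<in> carrier_mat n n" "a \<in> carrier_mat n n" using la LsA Ac by auto
      have "- x = - l + (- 1) \<cdot>\<^sub>m (a * x0)" unfolding la(3) by (rule neg2_mat) (use c x0c in auto)
      also have "(- 1) \<cdot>\<^sub>m (a * x0) = ((- 1) \<cdot>\<^sub>m a) * x0" using mult_smult_assoc_mat[OF c(2) x0c] by simp
      finally show "- x \<in> L'" unfolding L'_def using la Lneg smultA by blast
    next
      fix b x assume b: "b \<in> A" and "x \<in> L'"
      then obtain l a where la: "l \<in> L" "a \<in> A" "x = l + a * x0" unfolding L'_def by blast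
      have c: "l \<in> carrier_mat n n" "a \<in> carrier_mat n n" "b \<in> carrier_mat n n" using la b LsA Ac by auto
      have "b * x = b * l + b * (a * x0)" unfolding la(3)
        using mult_add_distrib_mat[OF c(3) c(1) mult_carrier_mat[OF c(2) x0c]] .
      also have "b * (a * x0) = (b * a) * x0" using assoc_mult_mat[OF c(3) c(2) x0c] by simp
      finally show "b * x \<in> L'" unfolding L'_def using la b Lmul multA by blast
    qed
    have LL': "L \<subseteq> L'"
    proof
      fix l assume l: "l \<in> L"
      have "l = l + 0\<^sub>m n n * x0" using x0c l LsA Ac by auto
      then show "l \<in> L'" unfolding L'_def using l zeroA by blast
    qed
    have "x0 = 0\<^sub>m n n + 1\<^sub>m n * x0" using x0c by simp
    then have "x0 \<in> L'" unfolding L'_def using L0 oneA by blast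
    then have "L' \<noteq> L" using nx by blast
    then have "L' = A" using Lmax LI' LL' by blast
    then have "1\<^sub>m n \<in> L'" using oneA by simp
    then obtain l a where la: "l \<in> L" "a \<in> A" "1\<^sub>m n = l + a * x0" unfolding L'_def by blast
    have c: "l \<in> carrier_mat n n" "a \<in> carrier_mat n n" using la LsA Ac by auto
    define z where "z = a * x0"
    have zc: "z \<in> carrier_mat n n" unfolding z_def using c x0c by simp
    have zA: "z \<in> A" unfolding z_def using multA la(2) x0A by simp
    have "z = (a * (h * g)) * (u - 1\<^sub>m n)" unfolding z_def x0eq
      using assoc_mult_mat[OF c(2) hgc, of "u - 1\<^sub>m n" n] uc by simp
    then have zn: "z ^\<^sub>m n = 0\<^sub>m n n" using nilp[OF multA[OF la(2) hgA] u(1)] by simp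
    have lz: "l = 1\<^sub>m n - z" using sub_from_mat[OF c(1) zc] la(3) unfolding z_def by simp
    define b where "b = gs n z n"
    have bA: "b \<in> A" unfolding b_def A_def using gs_env zA[unfolded A_def] by blast
    have "b * l = 1\<^sub>m n - z ^\<^sub>m n" unfolding lz b_def using gs_geom[OF zc] .
    also have "\<dots> = 1\<^sub>m n" unfolding zn by (intro eq_matI) auto
    finally have "1\<^sub>m n \<in> L" using Lmul bA la(1) by metis
    then have "A \<subseteq> L"
    proof -
      assume one: "1\<^sub>m n \<in> L"
      show ?thesis
      proof
        fix a assume a: "a \<in> A"
        have "a * 1\<^sub>m n \<in> L" using Lmul a one by blast
        then show "a \<in> L" using Ac[OF a] by simp
      qed
    qed
    then show False using LA LsA by blast
  qed
  then show ?thesis unfolding jacobson_rad_def A_def[symmetric] x0_def[symmetric] using x0A by blast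
qed

end
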